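(* Let $(M_i)_{i\in\omega}$ be a sequence with $\emptyset\ne M_i\subseteq\omega^{B_i}$, where each $B_i$ is a nonempty finite set, each $M_i$ is an upper set, and $0\notin M_i$ for all $i$. Let $(T_i)_{i\in\omega}$ and $(T'_i)_{i\in\omega}$ be the uniform and geometric thresholds of $(M_i)_{i\in\omega}$, respectively. If both $\#B_i\to\infty$ and $T'_i\to\infty$ as $i\to\infty$, then $T_i/T'_i\to1$ as $i\to\infty$.
   Context: $\omega$ denotes the set of nonnegative integers and $\omega^B$ the set of functions $B\to\omega$, ordered pointwise; $0$ is the zero function. $M$ is an upper set if $f\in M$, $f\le g$ imply $g\in M$. For $T\in\omega$, $\mu_T$ is the probability measure on $\omega^B$ uniform on $\{f:\sum_{b\in B}f(b)=T\}$ and zero elsewhere. The geometric distribution on $\omega$ with parameter $0<p\le1$ assigns probability $p(1-p)^k$ to $k$. For $T\in\mathbb{R}_{\ge0}$, $\nu_T$ is the product of $\#B$ copies of the geometric distribution with parameter $(1+T/\#B)^{-1}$. The uniform threshold of $(M_i)$ is the sequence $(T_i)$ where $T_i\in\omega$ is minimal with $\mu_{T_i}(M_i)\ge\tfrac12$; the geometric threshold is the sequence $(T'_i)$ where $T'_i$ is the unique positive real with $\nu_{T'_i}(M_i)=\tfrac12$. *)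

theory Defs
  imports "HOL-Probability.Probability"
begin

text \<open>Functions \<open>B \<rightarrow> \<omega>\<close> are represented extensionally as elements of
  \<open>B \<rightarrow>\<^sub>E (UNIV::nat set)\<close> (value \<open>undefined\<close> outside \<open>B\<close>).\<close>

definition zero_fun :: "'b set \<Rightarrow> ('b \<Rightarrow> nat)" where
  "zero_fun B = (\<lambda>b\<in>B. 0)"

definition upper_set :: "'b set \<Rightarrow> ('b \<Rightarrow> nat) set \<Rightarrow> bool" where
  "upper_set B M \<longleftrightarrow> (\<forall>f\<in>M. \<forall>g \<in> B \<rightarrow>\<^sub>E (UNIV::nat set).
      (\<forall>b\<in>B. f b \<le> g b) \<longrightarrow> g \<in> M)"

definition level :: "'b set \<Rightarrow> nat \<Rightarrow> ('b \<Rightarrow> nat) set" where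
  "level B T = {f \<in> B \<rightarrow>\<^sub>E (UNIV::nat set). (\<Sum>b\<in>B. f b) = T}"

definition mu :: "'b set \<Rightarrow> nat \<Rightarrow> ('b \<Rightarrow> nat) pmf" where
  "mu B T = pmf_of_set (level B T)"

definition nu :: "'b set \<Rightarrow> real \<Rightarrow> ('b \<Rightarrow> nat) pmf" where
  "nu B T = Pi_pmf B undefined (\<lambda>_. geometric_pmf (1 / (1 + T / real (card B))))"

definition uniform_threshold :: "'b set \<Rightarrow> ('b \<Rightarrow> nat) set \<Rightarrow> nat" where
  "uniform_threshold B M = (LEAST T. measure_pmf.prob (mu B T) M \<ge> 1/2)"

definition geometric_threshold :: "'b set \<Rightarrow> ('b \<Rightarrow> nat) set \<Rightarrow> real" where
  "geometric_threshold B M = (THE T. T > 0 \<and> measure_pmf.prob (nu B T) M = 1/2)"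

end

theory Submission
  imports Defs
begin


lemma sq_sums:
  fixes c :: real assumes c: "\<bar>c\<bar> < 1"
  shows "(\<lambda>n. c^n * (real n)^2) sums (c*(1+c)/(1-c)^3)"
proof -
  have s1: "(\<lambda>n. real n * z^n) sums (z/(1-z)^2)" if "norm z < 1" for z :: real
    using geometric_sums_times_n[of z] that by (simp add: mult.commute)
  have d: "((\<lambda>z. z/(1-z)^2) has_field_derivative ((1+c)/(1-c)^3)) (at c)"
  proof -
    have "((\<lambda>z. z/(1-z)^2) has_field_derivative ((1*(1-c)^2 - c*(2*(1-c)*(-1))) / ((1-c)^2)^2)) (at c)"
      using c by (auto intro!: derivative_eq_intros)
    moreover have "(1*(1-c)^2 - c*(2*(1-c)*(-1))) / ((1-c)^2)^2 = (1+c)/(1-c)^3"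
    proof -
      have ne: "1 - c \<noteq> 0" using c by auto
      have "(1*(1-c)^2 - c*(2*(1-c)*(-1))) = (1-c)*(1+c)" by (simp add: algebra_simps power2_eq_square)
      moreover have "((1-c)^2)^2 = (1-c)*(1-c)^3" by (simp add: power2_eq_square power3_eq_cube)
      ultimately show ?thesis using ne by simp
    qed
    ultimately show ?thesis by simp
  qed
  have "(\<lambda>n. diffs (\<lambda>n. real n) n * c ^ n) sums ((1+c)/(1-c)^3)"
    by (rule termdiffs_sums_strong[OF s1 d, of 1]) (use c in auto)
  hence "(\<lambda>n. c * ((real (Suc n))^2 * c ^ n)) sums (c * ((1+c)/(1-c)^3))"
    unfolding diffs_def by (intro sums_mult) (simp add: power2_eq_square)
  hence "(\<lambda>n. c^(Suc n) * (real (Suc n))^2) sums (c*(1+c)/(1-c)^3)"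
    by (simp add: algebra_simps)
  thus ?thesis by (subst (asm) sums_Suc_iff) simp
qed

lemma nn_geom_1:
  assumes p: "p \<in> {0<..1}"
  shows "(\<integral>\<^sup>+k. ennreal (real k) \<partial>geometric_pmf p) = ennreal ((1-p)/p)"
  using nn_integral_eq_integral[OF integrable_real_geometric_pmf[OF p]] expectation_geometric_pmf[OF p]
  by simp

lemma nn_geom_2:
  assumes p: "p \<in> {0<..1}"
  shows "(\<integral>\<^sup>+k. ennreal ((real k)^2) \<partial>geometric_pmf p) = ennreal ((1-p)*(2-p)/p^2)"
proof -
  have "(\<lambda>n. p * ((1-p)^n * (real n)^2)) sums (p * ((1-p)*(1+(1-p))/(1-(1-p))^3))"
    using p by (intro sums_mult sq_sums) auto
  moreover have "p * ((1-p)*(1+(1-p))/(1-(1-p))^3) = (1-p)*(2-p)/p^2"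
    using p by (simp add: field_simps power2_eq_square power3_eq_cube)
  ultimately have s: "(\<lambda>n. (1-p)^n * p * (real n)^2) sums ((1-p)*(2-p)/p^2)"
    by (simp add: mult_ac)
  have "(\<integral>\<^sup>+k. ennreal ((real k)^2) \<partial>geometric_pmf p) =
        (\<integral>\<^sup>+k. ennreal (pmf (geometric_pmf p) k * (real k)^2) \<partial>count_space UNIV)"
    by (simp add: nn_integral_measure_pmf ennreal_mult')
  also have "\<dots> = (\<Sum>k. ennreal ((1-p)^k * p * (real k)^2))"
    using p by (simp add: nn_integral_count_space_nat)
  also have "\<dots> = ennreal ((1-p)*(2-p)/p^2)"
    using s p by (subst suminf_ennreal2) (auto simp: sums_iff)
  finally show ?thesis .
qed

lemma ennreal_comb:
  assumes "a \<ge> 0" "b \<ge> 0" "c \<ge> 0" "d \<ge> 0"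
  shows "ennreal a + 2 * ennreal b * ennreal c + ennreal d = ennreal (a + 2*b*c + d)"
proof -
  have "2 * ennreal b * ennreal c = ennreal (2*b*c)"
    using assms by (simp add: ennreal_mult)
  thus ?thesis using assms by (simp add: ennreal_plus)
qed

lemma nn_nb_1:
  assumes p: "p \<in> {0<..1}"
  shows "(\<integral>\<^sup>+k. ennreal (real k) \<partial>neg_binomial_pmf n p) = ennreal (real n*(1-p)/p)"
proof -
  have "(\<lambda>k. ennreal (real k)) = of_nat" by (simp add: fun_eq_iff ennreal_of_nat_eq_real_of_nat)
  thus ?thesis using nn_integral_neg_binomial_pmf_real[OF p, of n] by simp
qed

lemma nn_nb_2:
  assumes p: "p \<in> {0<..1}"
  shows "(\<integral>\<^sup>+k. ennreal ((real k)^2) \<partial>neg_binomial_pmf n p) = ennreal (real n*(1-p)/p^2 + (real n*(1-p)/p)^2)"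
proof (induction n)
  case 0
  then show ?case by simp
next
  case (Suc n)
  have e: "ennreal ((real x + real y)^2) = ennreal ((real x)^2) + 2 * ennreal (real x) * ennreal (real y) + ennreal ((real y)^2)" for x y :: nat
    by (subst ennreal_comb) (auto simp: power2_eq_square algebra_simps)
  have "(\<integral>\<^sup>+k. ennreal ((real k)^2) \<partial>neg_binomial_pmf (Suc n) p) =
     (\<integral>\<^sup>+x. \<integral>\<^sup>+y. ennreal ((real x)^2) + 2 * ennreal (real x) * ennreal (real y) + ennreal ((real y)^2) \<partial>neg_binomial_pmf n p \<partial>geometric_pmf p)"
    by (simp add: neg_binomial_pmf_Suc case_prod_unfold nn_integral_pair_pmf' e)
  also have "\<dots> = (\<integral>\<^sup>+x. ennreal ((real x)^2) + 2 * ennreal (real x) * ennreal (real n*(1-p)/p) + ennreal (real n*(1-p)/p^2 + (real n*(1-p)/p)^2) \<partial>geometric_pmf p)"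
    by (simp add: nn_integral_add nn_integral_cmult Suc.IH nn_nb_1[OF p] measure_pmf.emeasure_space_1)
  also have "\<dots> = ennreal ((1-p)*(2-p)/p^2) + 2 * ennreal ((1-p)/p) * ennreal (real n*(1-p)/p) + ennreal (real n*(1-p)/p^2 + (real n*(1-p)/p)^2)"
    by (simp add: nn_integral_add nn_integral_multc nn_integral_cmult nn_geom_2[OF p] nn_geom_1[OF p] measure_pmf.emeasure_space_1)
  also have "\<dots> = ennreal ((1-p)*(2-p)/p^2 + 2 * ((1-p)/p) * (real n*(1-p)/p) + (real n*(1-p)/p^2 + (real n*(1-p)/p)^2))"
    using p by (intro ennreal_comb) auto
  also have "(1-p)*(2-p)/p^2 + 2 * ((1-p)/p) * (real n*(1-p)/p) + (real n*(1-p)/p^2 + (real n*(1-p)/p)^2)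
       = real (Suc n)*(1-p)/p^2 + (real (Suc n)*(1-p)/p)^2"
    using p by (simp add: field_simps power2_eq_square)
  finally show ?case .
qed

lemma nb_tail:
  assumes p: "p \<in> {0<..1}" and d: "d > 0"
  shows "measure_pmf.prob (neg_binomial_pmf n p) {x. \<bar>real x - real n*(1-p)/p\<bar> \<ge> d} \<le> (real n*(1-p)/p^2) / d^2"
proof -
  let ?M = "neg_binomial_pmf n p"
  have i1: "integrable ?M real" and e1: "measure_pmf.expectation ?M real = real n*(1-p)/p"
    using nn_integral_eq_integrable[of real ?M "real n*(1-p)/p"] nn_nb_1[OF p, of n] p by auto
  have i2: "integrable ?M (\<lambda>x. (real x)^2)" and e2: "measure_pmf.expectation ?M (\<lambda>x. (real x)^2) = real n*(1-p)/p^2 + (real n*(1-p)/p)^2"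
    using nn_integral_eq_integrable[of "\<lambda>x. (real x)^2" ?M "real n*(1-p)/p^2 + (real n*(1-p)/p)^2"] nn_nb_2[OF p, of n] p by auto
  have v: "measure_pmf.variance ?M real = real n*(1-p)/p^2"
    using measure_pmf.variance_eq[OF i1 i2] e1 e2 by simp
  have "measure_pmf.prob ?M {x\<in>space ?M. \<bar>real x - measure_pmf.expectation ?M real\<bar> \<ge> d} \<le> measure_pmf.variance ?M real / d^2"
    by (rule measure_pmf.Chebyshev_inequality) (use i2 d in auto)
  thus ?thesis using v e1 by simp
qed

definition G :: "'b set \<Rightarrow> real \<Rightarrow> ('b \<Rightarrow> nat) pmf" where
  "G B q = Pi_pmf B undefined (\<lambda>_. geometric_pmf (1-q))"

definition Ssum :: "'b set \<Rightarrow> ('b \<Rightarrow> nat) \<Rightarrow> nat" where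
  "Ssum B f = (\<Sum>b\<in>B. f b)"

lemma G_insert:
  assumes "finite B" "b \<notin> B"
  shows "G (insert b B) q = map_pmf (\<lambda>(y,f). f(b:=y)) (pair_pmf (geometric_pmf (1-q)) (G B q))"
  unfolding G_def using Pi_pmf_insert[OF assms, of undefined "\<lambda>_. geometric_pmf (1-q)"] by simp

lemma Ssum_upd:
  assumes "finite B" "b \<notin> B"
  shows "Ssum (insert b B) (f(b:=y)) = y + Ssum B f"
proof -
  have "(\<Sum>c\<in>B. (f(b:=y)) c) = (\<Sum>c\<in>B. f c)" using assms by (intro sum.cong) auto
  thus ?thesis using assms by (simp add: Ssum_def)
qed

lemma map_S_G:
  assumes "finite B"
  shows "map_pmf (Ssum B) (G B q) = neg_binomial_pmf (card B) (1-q)"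
  using assms
proof (induction B rule: finite_induct)
  case empty
  then show ?case by (simp add: G_def Ssum_def)
next
  case (insert b B)
  have "map_pmf (Ssum (insert b B)) (G (insert b B) q) =
        map_pmf (\<lambda>(y,f). y + Ssum B f) (pair_pmf (geometric_pmf (1-q)) (G B q))"
    using insert by (simp add: G_insert pmf.map_comp o_def case_prod_unfold Ssum_upd)
  also have "\<dots> = map_pmf (\<lambda>(x,y). x + y) (map_pmf (\<lambda>(a, b). (id a, Ssum B b)) (pair_pmf (geometric_pmf (1-q)) (G B q)))"
    by (simp add: pmf.map_comp o_def case_prod_unfold)
  also have "\<dots> = neg_binomial_pmf (card (insert b B)) (1-q)"
    unfolding map_pair using insert by (simp add: neg_binomial_pmf_Suc)
  finally show ?case .
qed


lemma geom_pmf_q: "q \<in> {0<..<1} \<Longrightarrow> pmf (geometric_pmf (1-q)) i = q^i * (1-q)"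
  by simp

lemma sum_geom_le: "(\<Sum>i\<le>j. q^i*(1-q)) = 1 - (q::real)^(Suc j)"
  by (induction j) (auto simp: algebra_simps)

lemma sum_geom_k_le:
  assumes "(q::real) \<noteq> 1"
  shows "(\<Sum>i\<le>j. real i * (q^i*(1-q))) = q/(1-q) - q^(Suc j)*(real (Suc j) + q/(1-q))"
proof (induction j)
  case 0
  then show ?case using assms by (simp add: field_simps)
next
  case (Suc j)
  have ne: "1 - q \<noteq> 0" using assms by simp
  define r where "r = q/(1-q)"
  have r: "r = q + q*r" using ne by (simp add: r_def field_simps)
  define x where "x = q^(Suc j)"
  have key: "a - x*(n+r) + n*(x*(1-q)) = a - q*x*(n+1+r)" for a n :: real
  proof -
    have "x*r = x*q + q*x*r" using r by (metis distrib_left mult.assoc mult.commute)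
    thus ?thesis by (simp add: algebra_simps)
  qed
  have "(\<Sum>i\<le>Suc j. real i * (q^i*(1-q))) = (q/(1-q) - q^(Suc j)*(real (Suc j) + q/(1-q))) + real (Suc j)*(q^(Suc j)*(1-q))"
    using Suc by simp
  also have "\<dots> = q/(1-q) - q*x*(real (Suc j) + 1 + r)"
    using key[of "q/(1-q)" "real (Suc j)"] unfolding x_def r_def by simp
  also have "\<dots> = q/(1-q) - q^(Suc (Suc j))*(real (Suc (Suc j)) + q/(1-q))"
    by (simp add: x_def r_def)
  finally show ?case .
qed

context
  fixes q :: real assumes q: "q \<in> {0<..<1}"
begin

abbreviation "gq \<equiv> geometric_pmf (1-q)"

lemma p_in: "1 - q \<in> {0<..1}" using q by auto

lemma integrable_k: "integrable gq real"
  using integrable_real_geometric_pmf[OF p_in] .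

lemma E_k: "measure_pmf.expectation gq real = q/(1-q)"
  using expectation_geometric_pmf[OF p_in] by simp

lemma prob_le: "measure_pmf.prob gq {..j} = 1 - q^(Suc j)"
proof -
  have "measure_pmf.prob gq {..j} = (\<Sum>i\<le>j. pmf gq i)"
    by (simp add: measure_measure_pmf_finite)
  also have "\<dots> = 1 - q^(Suc j)" using q by (simp add: sum_geom_le)
  finally show ?thesis .
qed

lemma prob_gt: "measure_pmf.prob gq {j<..} = q^(Suc j)"
proof -
  have "{j<..} = UNIV - {..j}" by auto
  hence "measure_pmf.prob gq {j<..} = 1 - measure_pmf.prob gq {..j}"
    using measure_pmf.prob_compl[of "{..j}" gq] by simp
  thus ?thesis using prob_le by simp
qed

lemma E_k_le: "measure_pmf.expectation gq (\<lambda>k. real k * indicator {..j} k) = q/(1-q) - q^(Suc j)*(real (Suc j) + q/(1-q))"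
proof -
  have "measure_pmf.expectation gq (\<lambda>k. real k * indicator {..j} k) = (\<Sum>i\<le>j. real i * indicator {..j} i * pmf gq i)"
    by (intro integral_measure_pmf_real) (auto simp: indicator_def)
  also have "\<dots> = (\<Sum>i\<le>j. real i * (q^i*(1-q)))"
    using q by (intro sum.cong) auto
  also have "\<dots> = q/(1-q) - q^(Suc j)*(real (Suc j) + q/(1-q))"
    using q by (intro sum_geom_k_le) auto
  finally show ?thesis .
qed

lemma E_k_gt: "measure_pmf.expectation gq (\<lambda>k. real k * indicator {j<..} k) = q^(Suc j)*(real (Suc j) + q/(1-q))"
proof -
  have e: "real k * indicator {j<..} k = real k - real k * indicator {..j} k" for k
    by (auto simp: indicator_def)
  have i2: "integrable gq (\<lambda>k. real k * indicator {..j} k)"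
    by (rule Bochner_Integration.integrable_bound[OF integrable_k]) (auto simp: indicator_def)
  have "measure_pmf.expectation gq (\<lambda>k. real k * indicator {j<..} k) =
        measure_pmf.expectation gq real - measure_pmf.expectation gq (\<lambda>k. real k * indicator {..j} k)"
    unfolding e by (rule Bochner_Integration.integral_diff[OF integrable_k i2])
  thus ?thesis using E_k E_k_le by simp
qed

lemma one_minus_pow_le: "1 - q^m \<le> real m * (1-q)"
proof -
  have "1 - q^m = (1-q) * (\<Sum>i<m. q^i)" by (rule one_diff_power_eq)
  also have "(\<Sum>i<m. q^i) \<le> (\<Sum>i<m. 1)" using q by (intro sum_mono) (auto intro: power_le_one)
  finally show ?thesis using q by (simp add: mult.commute mult_left_mono)
qed

lemma cov_ind_le:
  fixes M :: "'x pmf" and Z :: "'x \<Rightarrow> real"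
  assumes "\<And>k. 0 \<le> Z k" "\<And>k. Z k \<le> 1"
  shows "measure_pmf.expectation M (\<lambda>k. Z k * indicator A k) - measure_pmf.prob M A * measure_pmf.expectation M Z
     \<le> measure_pmf.prob M A * (1 - measure_pmf.prob M A)"
proof -
  let ?E = "measure_pmf.expectation M" and ?P = "measure_pmf.prob M A"
  have iZ: "integrable M Z" by (rule measure_pmf.integrable_const_bound[where B=1]) (use assms in auto)
  have iZA: "integrable M (\<lambda>k. Z k * indicator A k)"
    by (rule measure_pmf.integrable_const_bound[where B=1]) (use assms in \<open>auto simp: indicator_def\<close>)
  have h1: "?E (\<lambda>k. Z k * indicator A k) \<le> ?P"
  proof -
    have iI: "integrable M (indicator A :: 'x \<Rightarrow> real)"
      by (rule measure_pmf.integrable_const_bound[where B=1]) (auto simp: indicator_def)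
    have "?E (\<lambda>k. Z k * indicator A k) \<le> ?E (indicator A)"
      by (intro integral_mono iZA iI) (use assms in \<open>auto simp: indicator_def\<close>)
    thus ?thesis by simp
  qed
  have h2: "?E (\<lambda>k. Z k * indicator A k) \<le> ?E Z"
    by (intro integral_mono iZA iZ) (use assms in \<open>auto simp: indicator_def\<close>)
  have P01: "0 \<le> ?P" "?P \<le> 1" by auto
  have "?E (\<lambda>k. Z k * indicator A k) - ?P * ?E Z = (1 - ?P) * ?E (\<lambda>k. Z k * indicator A k) - ?P * (?E Z - ?E (\<lambda>k. Z k * indicator A k))"
    by (simp add: algebra_simps)
  also have "\<dots> \<le> (1 - ?P) * ?P - 0"
    using h1 h2 P01 by (intro diff_mono mult_left_mono mult_nonneg_nonneg) auto
  finally show ?thesis by (simp add: mult.commute)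
qed

lemma one_d_trunc:
  fixes N :: nat
  assumes mono: "mono Y" and Y0: "\<And>k. 0 \<le> Y k" and Y1: "\<And>k. Y k \<le> 1"
  defines "Z \<equiv> \<lambda>k. Y (min k N)"
  shows "measure_pmf.expectation gq (\<lambda>k. (Z k)^2) - (measure_pmf.expectation gq Z)^2
    \<le> (1-q) * (measure_pmf.expectation gq (\<lambda>k. real k * Z k) - q/(1-q) * measure_pmf.expectation gq Z)"
proof -
  let ?E = "measure_pmf.expectation gq"
  define D where "D j = Y (Suc j) - Y j" for j
  define A where "A j = (indicator {j<..} :: nat \<Rightarrow> real)" for j
  define r where "r = q/(1-q)"
  have D0: "D j \<ge> 0" for j using mono unfolding D_def by (simp add: monoD)
  have Zrep: "Z k = Y 0 + (\<Sum>j<N. D j * A j k)" for k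
  proof -
    have "(\<Sum>j<N. D j * A j k) = (\<Sum>j<N. if j < k then D j else 0)"
      by (intro sum.cong) (auto simp: A_def indicator_def)
    also have "\<dots> = (\<Sum>j\<in>{j\<in>{..<N}. j < k}. D j)"
      by (rule sum.inter_filter[symmetric]) simp
    also have "{j\<in>{..<N}. j < k} = {..<min k N}" by auto
    also have "(\<Sum>j<min k N. D j) = Y (min k N) - Y 0"
      unfolding D_def by (rule sum_lessThan_telescope)
    finally show ?thesis by (simp add: Z_def)
  qed
  have Z01: "0 \<le> Z k" "Z k \<le> 1" for k using Y0 Y1 by (auto simp: Z_def)
  have iZ: "integrable gq Z" by (rule measure_pmf.integrable_const_bound[where B=1]) (use Z01 in auto)
  have iA: "integrable gq (A j)" for j
    by (rule measure_pmf.integrable_const_bound[where B=1]) (auto simp: A_def indicator_def)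
  have iZA: "integrable gq (\<lambda>k. Z k * A j k)" for j
    by (rule measure_pmf.integrable_const_bound[where B=1]) (use Z01 in \<open>auto simp: A_def indicator_def\<close>)
  have ikA: "integrable gq (\<lambda>k. real k * A j k)" for j
    by (rule Bochner_Integration.integrable_bound[OF integrable_k]) (auto simp: A_def indicator_def)
  have EA: "?E (A j) = q^(Suc j)" for j using prob_gt by (simp add: A_def)
  have EkA: "?E (\<lambda>k. real k * A j k) = q^(Suc j)*(real (Suc j) + r)" for j
    using E_k_gt by (simp add: A_def r_def)
  have EZ: "?E Z = Y 0 + (\<Sum>j<N. D j * q^(Suc j))"
  proof -
    have "?E Z = ?E (\<lambda>k. Y 0 + (\<Sum>j<N. D j * A j k))"
      by (rule Bochner_Integration.integral_cong[OF refl]) (rule Zrep)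
    also have "\<dots> = Y 0 + (\<Sum>j<N. D j * ?E (A j))"
      using iA by (simp add: Bochner_Integration.integral_add Bochner_Integration.integral_sum)
    finally show ?thesis by (simp add: EA)
  qed
  have EkZ: "?E (\<lambda>k. real k * Z k) = Y 0 * r + (\<Sum>j<N. D j * (q^(Suc j)*(real (Suc j) + r)))"
  proof -
    have "?E (\<lambda>k. real k * Z k) = ?E (\<lambda>k. Y 0 * real k + (\<Sum>j<N. D j * (real k * A j k)))"
      by (simp add: Zrep algebra_simps sum_distrib_left)
    also have "\<dots> = Y 0 * ?E real + (\<Sum>j<N. D j * ?E (\<lambda>k. real k * A j k))"
      using ikA integrable_k by (simp add: Bochner_Integration.integral_add Bochner_Integration.integral_sum)
    finally show ?thesis by (simp add: EkA E_k r_def)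
  qed
  have EZ2: "?E (\<lambda>k. (Z k)^2) = Y 0 * ?E Z + (\<Sum>j<N. D j * ?E (\<lambda>k. Z k * A j k))"
  proof -
    have "?E (\<lambda>k. (Z k)^2) = ?E (\<lambda>k. Y 0 * Z k + (\<Sum>j<N. D j * (Z k * A j k)))"
    proof (rule Bochner_Integration.integral_cong[OF refl])
      fix x
      have "(Z x)^2 = Z x * (Y 0 + (\<Sum>j<N. D j * A j x))" using Zrep[of x] by (simp add: power2_eq_square)
      thus "(Z x)^2 = Y 0 * Z x + (\<Sum>j<N. D j * (Z x * A j x))"
        by (simp add: algebra_simps sum_distrib_left)
    qed
    also have "\<dots> = Y 0 * ?E Z + (\<Sum>j<N. D j * ?E (\<lambda>k. Z k * A j k))"
      using iZA iZ by (simp add: Bochner_Integration.integral_add Bochner_Integration.integral_sum)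
    finally show ?thesis .
  qed
  have cov: "?E (\<lambda>k. Z k * A j k) - q^(Suc j) * ?E Z \<le> q^(Suc j) * (1 - q^(Suc j))" for j
    using cov_ind_le[of Z gq "{j<..}", OF Z01] prob_gt by (simp add: A_def)
  have "?E (\<lambda>k. (Z k)^2) - (?E Z)^2 = (\<Sum>j<N. D j * (?E (\<lambda>k. Z k * A j k) - q^(Suc j) * ?E Z))"
  proof -
    define e where "e = ?E Z"
    define sN where "sN = (\<Sum>j<N. D j * q^(Suc j))"
    define T where "T = (\<Sum>j<N. D j * ?E (\<lambda>k. Z k * A j k))"
    have e: "e = Y 0 + sN" using EZ by (simp add: e_def sN_def)
    have "(\<Sum>j<N. D j * (?E (\<lambda>k. Z k * A j k) - q^(Suc j) * e)) = T - sN * e"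
      by (simp add: T_def sN_def sum_subtractf sum_distrib_right sum_distrib_left algebra_simps)
    moreover have "?E (\<lambda>k. (Z k)^2) - e^2 = T - sN * e"
      using EZ2 e by (simp add: T_def e_def[symmetric] power2_eq_square algebra_simps)
    ultimately show ?thesis by (simp add: e_def)
  qed
  also have "\<dots> \<le> (\<Sum>j<N. D j * (q^(Suc j) * (real (Suc j) * (1-q))))"
  proof (intro sum_mono mult_left_mono D0)
    fix j
    have "q^(Suc j) * (1 - q^(Suc j)) \<le> q^(Suc j) * (real (Suc j) * (1-q))"
      using q one_minus_pow_le[of "Suc j"] by (intro mult_left_mono) auto
    thus "?E (\<lambda>k. Z k * A j k) - q^(Suc j) * ?E Z \<le> q^(Suc j) * (real (Suc j) * (1-q))"
      using cov[of j] by linarith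
  qed
  also have "\<dots> = (1-q) * (?E (\<lambda>k. real k * Z k) - q/(1-q) * ?E Z)"
  proof -
    define sN where "sN = (\<Sum>j<N. D j * q^(Suc j))"
    have "(\<Sum>j<N. D j * (q^(Suc j)*(real (Suc j) + r))) = (\<Sum>j<N. D j * (q^(Suc j) * real (Suc j))) + r * sN"
      by (simp add: sN_def algebra_simps sum.distrib sum_distrib_left)
    hence "?E (\<lambda>k. real k * Z k) - r * ?E Z = (\<Sum>j<N. D j * (q^(Suc j) * real (Suc j)))"
      using EkZ EZ by (simp add: sN_def algebra_simps)
    thus ?thesis by (simp add: r_def[symmetric] sum_distrib_left algebra_simps)
  qed
  finally show ?thesis .
qed

lemma trunc_lim: "(\<lambda>N. Y (min k N)) \<longlonglongrightarrow> (Y k :: real)"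
proof (rule tendsto_eventually)
  show "eventually (\<lambda>N. Y (min k N) = Y k) sequentially"
    unfolding eventually_sequentially by (rule exI[of _ k]) auto
qed

lemma one_d:
  assumes mono: "mono Y" and Y0: "\<And>k. 0 \<le> Y k" and Y1: "\<And>k. Y k \<le> 1"
  shows "measure_pmf.expectation gq (\<lambda>k. (Y k)^2) - (measure_pmf.expectation gq Y)^2
    \<le> (1-q) * (measure_pmf.expectation gq (\<lambda>k. real k * Y k) - q/(1-q) * measure_pmf.expectation gq Y)"
proof -
  let ?E = "measure_pmf.expectation gq"
  have c1: "(\<lambda>N. ?E (\<lambda>k. Y (min k N))) \<longlonglongrightarrow> ?E Y"
    by (rule integral_dominated_convergence[where w="\<lambda>_. 1"]) (use Y0 Y1 trunc_lim in auto)
  have c2: "(\<lambda>N. ?E (\<lambda>k. (Y (min k N))^2)) \<longlonglongrightarrow> ?E (\<lambda>k. (Y k)^2)"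
    by (rule integral_dominated_convergence[where w="\<lambda>_. 1"])
       (use Y0 Y1 in \<open>auto intro!: tendsto_intros trunc_lim simp: abs_square_le_1\<close>)
  have c3: "(\<lambda>N. ?E (\<lambda>k. real k * Y (min k N))) \<longlonglongrightarrow> ?E (\<lambda>k. real k * Y k)"
  proof (rule integral_dominated_convergence[where w="real"])
    show "integrable gq real" by (rule integrable_k)
    show "AE x in gq. (\<lambda>N. real x * Y (min x N)) \<longlonglongrightarrow> real x * Y x"
      by (auto intro!: tendsto_intros trunc_lim)
    fix N show "AE x in gq. norm (real x * Y (min x N)) \<le> real x"
      using Y0 Y1 by (auto simp: abs_mult intro!: mult_left_le)
  qed auto
  have "(\<lambda>N. ?E (\<lambda>k. (Y (min k N))^2) - (?E (\<lambda>k. Y (min k N)))^2)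
      \<longlonglongrightarrow> ?E (\<lambda>k. (Y k)^2) - (?E Y)^2"
    by (intro tendsto_intros c1 c2)
  moreover have "(\<lambda>N. (1-q) * (?E (\<lambda>k. real k * Y (min k N)) - q/(1-q) * ?E (\<lambda>k. Y (min k N))))
      \<longlonglongrightarrow> (1-q) * (?E (\<lambda>k. real k * Y k) - q/(1-q) * ?E Y)"
    by (intro tendsto_intros c1 c3)
  ultimately show ?thesis
    by (rule LIMSEQ_le) (use one_d_trunc[OF mono Y0 Y1] in auto)
qed

end


definition PP :: "'b set \<Rightarrow> real \<Rightarrow> ('b \<Rightarrow> nat) set \<Rightarrow> real" where
  "PP B q M = measure_pmf.prob (G B q) M"

definition QQ :: "'b set \<Rightarrow> real \<Rightarrow> ('b \<Rightarrow> nat) set \<Rightarrow> real" where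
  "QQ B q M = measure_pmf.expectation (G B q) (\<lambda>f. real (Ssum B f) * indicator M f)"

definition sect :: "('b \<Rightarrow> nat) set \<Rightarrow> 'b \<Rightarrow> nat \<Rightarrow> ('b \<Rightarrow> nat) set" where
  "sect M b y = {g. g(b:=y) \<in> M}"

lemma integrable_S:
  assumes "finite B" "q \<in> {0<..<1}"
  shows "integrable (G B q) (\<lambda>f. real (Ssum B f))"
    and "measure_pmf.expectation (G B q) (\<lambda>f. real (Ssum B f)) = real (card B) * q / (1-q)"
proof -
  have p: "1 - q \<in> {0<..1}" using assms by auto
  have "integrable (map_pmf (Ssum B) (G B q)) real"
    unfolding map_S_G[OF assms(1)] by (rule integrable_neg_binomial_pmf_real[OF p])
  thus "integrable (G B q) (\<lambda>f. real (Ssum B f))" by simp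
  have "measure_pmf.expectation (map_pmf (Ssum B) (G B q)) real = real (card B) * q / (1-q)"
    unfolding map_S_G[OF assms(1)] using expectation_neg_binomial_pmf[OF p] by simp
  thus "measure_pmf.expectation (G B q) (\<lambda>f. real (Ssum B f)) = real (card B) * q / (1-q)" by simp
qed

lemma integrable_SM:
  assumes "finite B" "q \<in> {0<..<1}"
  shows "integrable (G B q) (\<lambda>f. real (Ssum B f) * indicator M f)"
  by (rule Bochner_Integration.integrable_bound[OF integrable_S(1)[OF assms]])
     (auto simp: indicator_def)

lemma QQ_bounds:
  assumes "finite B" "q \<in> {0<..<1}"
  shows "0 \<le> QQ B q M" "QQ B q M \<le> real (card B) * q / (1-q)"
proof -
  show "0 \<le> QQ B q M" unfolding QQ_def by (intro integral_nonneg_AE) auto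
  have "QQ B q M \<le> measure_pmf.expectation (G B q) (\<lambda>f. real (Ssum B f))"
    unfolding QQ_def by (intro integral_mono integrable_SM integrable_S assms) (auto simp: indicator_def)
  thus "QQ B q M \<le> real (card B) * q / (1-q)" using integrable_S(2)[OF assms] by simp
qed

lemma nn_G_insert:
  assumes "finite B" "b \<notin> B"
  shows "(\<integral>\<^sup>+f. h f \<partial>G (insert b B) q) = (\<integral>\<^sup>+y. \<integral>\<^sup>+g. h (g(b:=y)) \<partial>G B q \<partial>geometric_pmf (1-q))"
  by (simp add: G_insert[OF assms] nn_integral_pair_pmf' case_prod_unfold)

lemma PP_insert:
  assumes "finite B" "b \<notin> B" "q \<in> {0<..<1}"
  shows "PP (insert b B) q M = measure_pmf.expectation (geometric_pmf (1-q)) (\<lambda>y. PP B q (sect M b y))"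
proof -
  have "ennreal (PP (insert b B) q M) = (\<integral>\<^sup>+f. indicator M f \<partial>G (insert b B) q)"
    by (simp add: PP_def measure_pmf.emeasure_eq_measure[symmetric])
  also have "\<dots> = (\<integral>\<^sup>+y. \<integral>\<^sup>+g. indicator (sect M b y) g \<partial>G B q \<partial>geometric_pmf (1-q))"
    by (simp add: nn_G_insert[OF assms(1,2)] sect_def indicator_def)
  also have "\<dots> = (\<integral>\<^sup>+y. ennreal (PP B q (sect M b y)) \<partial>geometric_pmf (1-q))"
    by (simp add: PP_def measure_pmf.emeasure_eq_measure)
  also have "\<dots> = ennreal (measure_pmf.expectation (geometric_pmf (1-q)) (\<lambda>y. PP B q (sect M b y)))"
    by (rule nn_integral_eq_integral)
       (auto simp: PP_def intro!: measure_pmf.integrable_const_bound[where B=1])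
  finally show ?thesis
    by (subst (asm) ennreal_inj) (auto simp: PP_def intro!: integral_nonneg_AE)
qed

lemma QQ_insert:
  assumes "finite B" "b \<notin> B" "q \<in> {0<..<1}"
  shows "QQ (insert b B) q M = measure_pmf.expectation (geometric_pmf (1-q))
             (\<lambda>y. real y * PP B q (sect M b y) + QQ B q (sect M b y))"
proof -
  have fin: "finite (insert b B)" using assms by simp
  have iy: "integrable (geometric_pmf (1-q)) (\<lambda>y. real y * PP B q (sect M b y) + QQ B q (sect M b y))"
  proof (intro Bochner_Integration.integrable_add)
    show "integrable (geometric_pmf (1-q)) (\<lambda>y. real y * PP B q (sect M b y))"
      by (rule Bochner_Integration.integrable_bound[OF integrable_real_geometric_pmf])
         (use assms in \<open>auto simp: PP_def intro!: mult_left_le\<close>)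
    show "integrable (geometric_pmf (1-q)) (\<lambda>y. QQ B q (sect M b y))"
      by (rule measure_pmf.integrable_const_bound[where B="real (card B) * q / (1-q)"])
         (use QQ_bounds[OF assms(1,3)] in auto)
  qed
  have "ennreal (QQ (insert b B) q M) = (\<integral>\<^sup>+f. ennreal (real (Ssum (insert b B) f) * indicator M f) \<partial>G (insert b B) q)"
    unfolding QQ_def
    by (rule nn_integral_eq_integral[symmetric]) (auto intro!: integrable_SM fin assms)
  also have "\<dots> = (\<integral>\<^sup>+y. \<integral>\<^sup>+g. ennreal (real y) * indicator (sect M b y) g + ennreal (real (Ssum B g) * indicator (sect M b y) g) \<partial>G B q \<partial>geometric_pmf (1-q))"
    by (simp add: nn_G_insert[OF assms(1,2)] Ssum_upd[OF assms(1,2)] sect_def indicator_def)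
       (intro nn_integral_cong, auto simp: of_bool_def ennreal_plus)
  also have "\<dots> = (\<integral>\<^sup>+y. ennreal (real y * PP B q (sect M b y) + QQ B q (sect M b y)) \<partial>geometric_pmf (1-q))"
  proof (rule nn_integral_cong)
    fix y
    have "(\<integral>\<^sup>+g. ennreal (real (Ssum B g) * indicator (sect M b y) g) \<partial>G B q) = ennreal (QQ B q (sect M b y))"
      unfolding QQ_def
      by (rule nn_integral_eq_integral) (auto intro!: integrable_SM assms)
    moreover have "(\<integral>\<^sup>+g. ennreal (real y) * indicator (sect M b y) g \<partial>G B q) = ennreal (real y * PP B q (sect M b y))"
      by (simp add: nn_integral_cmult PP_def measure_pmf.emeasure_eq_measure ennreal_mult)
    ultimately show "(\<integral>\<^sup>+g. ennreal (real y) * indicator (sect M b y) g + ennreal (real (Ssum B g) * indicator (sect M b y) g) \<partial>G B q)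
        = ennreal (real y * PP B q (sect M b y) + QQ B q (sect M b y))"
      using QQ_bounds(1)[OF assms(1,3)]
      by (subst nn_integral_add) (auto simp: PP_def ennreal_plus)
  qed
  also have "\<dots> = ennreal (measure_pmf.expectation (geometric_pmf (1-q)) (\<lambda>y. real y * PP B q (sect M b y) + QQ B q (sect M b y)))"
    by (rule nn_integral_eq_integral[OF iy]) (use QQ_bounds(1)[OF assms(1,3)] in \<open>auto simp: PP_def\<close>)
  finally show ?thesis
    by (subst (asm) ennreal_inj) (auto simp: QQ_def PP_def intro!: integral_nonneg_AE add_nonneg_nonneg)
qed


lemma upper_sect:
  assumes "b \<notin> B" "upper_set (insert b B) M"
  shows "upper_set B (sect M b y)"
  unfolding upper_set_def sect_def
proof (intro ballI impI, simp)
  fix f g assume f: "f(b:=y) \<in> M" and g: "g \<in> B \<rightarrow>\<^sub>E (UNIV::nat set)" and le: "\<forall>c\<in>B. f c \<le> g c"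
  have g': "g(b:=y) \<in> insert b B \<rightarrow>\<^sub>E (UNIV::nat set)"
    using g assms(1) by (auto simp: PiE_iff extensional_def)
  show "g(b:=y) \<in> M"
    using assms(2) f g' le unfolding upper_set_def by auto
qed

lemma PP_sect_mono:
  assumes "finite B" "b \<notin> B" "upper_set (insert b B) M" "y \<le> y'"
  shows "PP B q (sect M b y) \<le> PP B q (sect M b y')"
  unfolding PP_def
proof (rule measure_pmf.finite_measure_mono_AE)
  show "AE x in G B q. x \<in> sect M b y \<longrightarrow> x \<in> sect M b y'"
  proof (subst AE_measure_pmf_iff, intro ballI impI)
    fix x assume x: "x \<in> set_pmf (G B q)" and xs: "x \<in> sect M b y"
    have ext: "\<forall>c. c \<notin> B \<longrightarrow> x c = undefined"
      using set_Pi_pmf_subset[OF assms(1), of undefined "\<lambda>_. geometric_pmf (1-q)"] x by (auto simp: G_def)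
    have "x(b:=y') \<in> insert b B \<rightarrow>\<^sub>E (UNIV::nat set)"
      using ext assms(2) by (auto simp: PiE_iff extensional_def)
    moreover have "x(b:=y) \<in> M" using xs by (simp add: sect_def)
    ultimately show "x \<in> sect M b y'"
      using assms(3,4) unfolding upper_set_def sect_def by auto
  qed
qed auto

lemma ES:
  assumes "finite B" "q \<in> {0<..<1}"
  shows "upper_set B M \<Longrightarrow> PP B q M * (1 - PP B q M) \<le> (1-q) * (QQ B q M - real (card B) * q/(1-q) * PP B q M)"
  using assms(1)
proof (induction B arbitrary: M rule: finite_induct)
  case empty
  have "PP {} q M = indicator M (\<lambda>_. undefined)" by (simp add: PP_def G_def)
  moreover have "QQ {} q M = 0" by (simp add: QQ_def G_def Ssum_def)
  ultimately show ?case by (auto simp: indicator_def)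
next
  case (insert b B)
  let ?E = "measure_pmf.expectation (geometric_pmf (1-q))"
  define Y where "Y y = PP B q (sect M b y)" for y
  define Z where "Z y = QQ B q (sect M b y)" for y
  define tB where "tB = real (card B) * q/(1-q)"
  have q: "q \<in> {0<..<1}" by (rule assms(2))
  have Y01: "0 \<le> Y y" "Y y \<le> 1" for y by (auto simp: Y_def PP_def)
  have monoY: "mono Y" unfolding mono_def Y_def
    using PP_sect_mono[OF insert(1,2) insert(4)] by blast
  have IH: "Y y * (1 - Y y) \<le> (1-q) * (Z y - tB * Y y)" for y
    unfolding Y_def Z_def tB_def by (rule insert(3)[OF upper_sect[OF insert(2,4)]])
  have P: "PP (insert b B) q M = ?E Y"
    unfolding Y_def by (rule PP_insert[OF insert(1,2) q])
  have iY: "integrable (geometric_pmf (1-q)) Y"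
    by (rule measure_pmf.integrable_const_bound[where B=1]) (use Y01 in auto)
  have iY2: "integrable (geometric_pmf (1-q)) (\<lambda>y. (Y y)^2)"
    by (rule measure_pmf.integrable_const_bound[where B=1]) (use Y01 in \<open>auto simp: abs_square_le_1\<close>)
  have iZ: "integrable (geometric_pmf (1-q)) Z"
    by (rule measure_pmf.integrable_const_bound[where B=tB]) (use QQ_bounds[OF insert(1) q] in \<open>auto simp: Z_def tB_def\<close>)
  have iyY: "integrable (geometric_pmf (1-q)) (\<lambda>y. real y * Y y)"
    by (rule Bochner_Integration.integrable_bound[OF integrable_real_geometric_pmf])
       (use q Y01 in \<open>auto intro!: mult_left_le\<close>)
  have Q: "QQ (insert b B) q M = ?E (\<lambda>y. real y * Y y) + ?E Z"
    unfolding QQ_insert[OF insert(1,2) q] Y_def[symmetric] Z_def[symmetric]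
    by (rule Bochner_Integration.integral_add[OF iyY iZ])
  have card: "real (card (insert b B)) * q/(1-q) = tB + q/(1-q)"
    using insert(1,2) by (simp add: tB_def add_divide_distrib algebra_simps)
  have oneD: "?E (\<lambda>y. (Y y)^2) - (?E Y)^2 \<le> (1-q) * (?E (\<lambda>y. real y * Y y) - q/(1-q) * ?E Y)"
    by (rule one_d[OF q monoY Y01])
  have intIH: "?E (\<lambda>y. Y y - (Y y)^2) \<le> ?E (\<lambda>y. (1-q) * (Z y - tB * Y y))"
    by (rule integral_mono) (use IH iY iY2 iZ in \<open>auto simp: power2_eq_square algebra_simps\<close>)
  have e1: "?E (\<lambda>y. Y y - (Y y)^2) = ?E Y - ?E (\<lambda>y. (Y y)^2)"
    by (rule Bochner_Integration.integral_diff[OF iY iY2])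
  have e2: "?E (\<lambda>y. (1-q) * (Z y - tB * Y y)) = (1-q) * (?E Z - tB * ?E Y)"
    using iZ iY by simp
  show ?case
    unfolding P Q card using oneD intIH e1 e2
    by (simp add: algebra_simps power2_eq_square)
qed


lemma level_finite:
  assumes "finite B" shows "finite (level B s)"
proof (rule finite_subset)
  show "level B s \<subseteq> B \<rightarrow>\<^sub>E {..s}"
  proof
    fix f assume f: "f \<in> level B s"
    have "f b \<le> s" if "b \<in> B" for b
      using f member_le_sum[of b B f] that assms by (auto simp: level_def)
    thus "f \<in> B \<rightarrow>\<^sub>E {..s}" using f by (auto simp: level_def PiE_iff)
  qed
  show "finite (B \<rightarrow>\<^sub>E {..s})" using assms by (intro finite_PiE) auto
qed

lemma pmf_G:
  assumes "finite B" "f \<in> B \<rightarrow>\<^sub>E (UNIV::nat set)" "q \<in> {0<..<1}"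
  shows "pmf (G B q) f = (1-q)^card B * q^(Ssum B f)"
proof -
  have "pmf (G B q) f = (\<Prod>b\<in>B. pmf (geometric_pmf (1-q)) (f b))"
    unfolding G_def using assms by (intro pmf_Pi') (auto simp: PiE_iff extensional_def)
  also have "\<dots> = (\<Prod>b\<in>B. q^(f b) * (1-q))" using assms(3) by simp
  also have "\<dots> = q^(Ssum B f) * (1-q)^card B"
    by (simp add: prod.distrib Ssum_def power_sum)
  finally show ?thesis by simp
qed

lemma measure_level:
  assumes "finite B" "q \<in> {0<..<1}"
  shows "measure_pmf.prob (G B q) (M \<inter> level B s) = real (card (M \<inter> level B s)) * ((1-q)^card B * q^s)"
proof -
  have fin: "finite (M \<inter> level B s)" using level_finite[OF assms(1)] by auto
  have "measure_pmf.prob (G B q) (M \<inter> level B s) = (\<Sum>f\<in>M \<inter> level B s. pmf (G B q) f)"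
    by (rule measure_measure_pmf_finite[OF fin])
  also have "\<dots> = (\<Sum>f\<in>M \<inter> level B s. (1-q)^card B * q^s)"
    using assms by (intro sum.cong refl) (auto simp: pmf_G level_def Ssum_def)
  finally show ?thesis by simp
qed

lemma set_pmf_G:
  assumes "finite B" "f \<in> set_pmf (G B q)"
  shows "f \<in> B \<rightarrow>\<^sub>E (UNIV::nat set)"
  using set_Pi_pmf_subset[OF assms(1), of undefined "\<lambda>_. geometric_pmf (1-q)"] assms(2)
  by (auto simp: G_def PiE_iff extensional_def)

lemma level_nn:
  assumes "finite B" "q \<in> {0<..<1}" "\<And>s. h s \<ge> 0"
  shows "(\<integral>\<^sup>+f. ennreal (h (Ssum B f)) * indicator M f \<partial>G B q)
       = (\<Sum>s. ennreal (h s * (real (card (M \<inter> level B s)) * ((1-q)^card B * q^s))))"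
proof -
  have "(\<integral>\<^sup>+f. ennreal (h (Ssum B f)) * indicator M f \<partial>G B q)
      = (\<integral>\<^sup>+f. (\<Sum>s. ennreal (h s) * indicator (M \<inter> level B s) f) \<partial>G B q)"
  proof (rule nn_integral_cong_AE, subst AE_measure_pmf_iff, intro ballI)
    fix f assume "f \<in> set_pmf (G B q)"
    hence fP: "f \<in> B \<rightarrow>\<^sub>E (UNIV::nat set)" by (rule set_pmf_G[OF assms(1)])
    have "(\<lambda>s. ennreal (h s) * indicator (M \<inter> level B s) f) = (\<lambda>s. if s = Ssum B f then ennreal (h s) * indicator M f else 0)"
      using fP by (auto simp: fun_eq_iff indicator_def level_def Ssum_def)
    moreover have "(\<lambda>s. if s = Ssum B f then ennreal (h s) * indicator M f else 0) sums (ennreal (h (Ssum B f)) * indicator M f)"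
      using sums_single[of "Ssum B f" "\<lambda>s. ennreal (h s) * indicator M f"] by simp
    ultimately show "ennreal (h (Ssum B f)) * indicator M f = (\<Sum>s. ennreal (h s) * indicator (M \<inter> level B s) f)"
      by (simp add: sums_iff)
  qed
  also have "\<dots> = (\<Sum>s. \<integral>\<^sup>+f. ennreal (h s) * indicator (M \<inter> level B s) f \<partial>G B q)"
    by (rule nn_integral_suminf) auto
  also have "\<dots> = (\<Sum>s. ennreal (h s * (real (card (M \<inter> level B s)) * ((1-q)^card B * q^s))))"
    using assms by (simp add: nn_integral_cmult_indicator measure_pmf.emeasure_eq_measure measure_level ennreal_mult)
  finally show ?thesis .
qed


definition NN :: "'b set \<Rightarrow> ('b \<Rightarrow> nat) set \<Rightarrow> nat \<Rightarrow> real" where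
  "NN B M s = real (card (M \<inter> level B s))"

lemma ennreal_suminf_sums:
  assumes "\<And>i. 0 \<le> a i" "0 \<le> x" "(\<Sum>i. ennreal (a i)) = ennreal x"
  shows "a sums x"
proof -
  have nt: "(\<Sum>i. ennreal (a i)) \<noteq> top" unfolding assms(3) by simp
  have s: "summable a" by (rule summable_suminf_not_top[OF assms(1) nt])
  have e: "(\<Sum>i. ennreal (a i)) = ennreal (suminf a)" by (rule suminf_ennreal2[OF assms(1) s])
  have "ennreal (suminf a) = ennreal x" using e assms(3) by (rule subst)
  moreover have "0 \<le> suminf a" by (rule suminf_nonneg[OF s assms(1)])
  ultimately have "suminf a = x" using assms(2) by (simp add: ennreal_inj)
  thus ?thesis using s by (simp add: sums_iff)
qed

lemma PP_sums:
  assumes "finite B" "q \<in> {0<..<1}"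
  shows "(\<lambda>s. NN B M s * ((1-q)^card B * q^s)) sums PP B q M"
proof -
  have "(\<Sum>s. ennreal (1 * (NN B M s * ((1-q)^card B * q^s)))) = (\<integral>\<^sup>+f. ennreal 1 * indicator M f \<partial>G B q)"
    using level_nn[OF assms, of "\<lambda>_. 1" M] by (simp add: NN_def)
  also have "\<dots> = ennreal (PP B q M)"
    by (simp add: PP_def measure_pmf.emeasure_eq_measure)
  finally have "(\<Sum>s. ennreal (NN B M s * ((1-q)^card B * q^s))) = ennreal (PP B q M)" by simp
  thus ?thesis
    by (rule ennreal_suminf_sums[rotated 2]) (use assms in \<open>auto simp: NN_def PP_def\<close>)
qed

lemma QQ_sums:
  assumes "finite B" "q \<in> {0<..<1}"
  shows "(\<lambda>s. real s * (NN B M s * ((1-q)^card B * q^s))) sums QQ B q M"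
proof -
  have "(\<Sum>s. ennreal (real s * (NN B M s * ((1-q)^card B * q^s)))) = (\<integral>\<^sup>+f. ennreal (real (Ssum B f)) * indicator M f \<partial>G B q)"
    using level_nn[OF assms, of real M] by (simp add: NN_def)
  also have "\<dots> = (\<integral>\<^sup>+f. ennreal (real (Ssum B f) * indicator M f) \<partial>G B q)"
    by (intro nn_integral_cong) (auto simp: indicator_def)
  also have "\<dots> = ennreal (QQ B q M)"
    unfolding QQ_def by (rule nn_integral_eq_integral) (auto intro!: integrable_SM assms)
  finally show ?thesis
    by (rule ennreal_suminf_sums[rotated 2]) (use assms QQ_bounds[OF assms] in \<open>auto simp: NN_def\<close>)
qed

lemma NN_nonneg: "NN B M s \<ge> 0" by (simp add: NN_def)

lemma NN_summable:
  assumes "finite B" "\<bar>z\<bar> < 1"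
  shows "summable (\<lambda>s. NN B M s * z^s)"
proof (cases "z = 0")
  case True
  then show ?thesis by simp
next
  case False
  define q where "q = \<bar>z\<bar>"
  have q: "q \<in> {0<..<1}" using False assms by (auto simp: q_def)
  have "summable (\<lambda>s. NN B M s * ((1-q)^card B * q^s))"
    using PP_sums[OF assms(1) q] by (simp add: sums_iff)
  hence "summable (\<lambda>s. (NN B M s * ((1-q)^card B * q^s)) / (1-q)^card B)"
    by (rule summable_divide)
  moreover have "(\<lambda>s. (NN B M s * ((1-q)^card B * q^s)) / (1-q)^card B) = (\<lambda>s. norm (NN B M s * z^s))"
  proof
    fix s
    have "(1-q)^card B \<noteq> 0" using q by simp
    thus "(NN B M s * ((1-q)^card B * q^s)) / (1-q)^card B = norm (NN B M s * z^s)"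
      using assms(2) by (simp add: q_def abs_mult power_abs NN_nonneg)
  qed
  ultimately have "summable (\<lambda>s. norm (NN B M s * z^s))" by simp
  thus ?thesis by (rule summable_norm_cancel)
qed

definition FF :: "'b set \<Rightarrow> ('b \<Rightarrow> nat) set \<Rightarrow> real \<Rightarrow> real" where
  "FF B M z = (\<Sum>s. NN B M s * z^s)"

lemma PP_FF:
  assumes "finite B" "q \<in> {0<..<1}"
  shows "PP B q M = (1-q)^card B * FF B M q"
proof -
  have "(\<lambda>s. (1-q)^card B * (NN B M s * q^s)) sums ((1-q)^card B * FF B M q)"
    unfolding FF_def using NN_summable[OF assms(1), of q] assms(2)
    by (intro sums_mult summable_sums) auto
  moreover have "(\<lambda>s. (1-q)^card B * (NN B M s * q^s)) = (\<lambda>s. NN B M s * ((1-q)^card B * q^s))"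
    by (simp add: fun_eq_iff algebra_simps)
  ultimately show ?thesis using PP_sums[OF assms, of M] sums_unique2 by metis
qed

lemma FF_deriv:
  assumes "finite B" "q \<in> {0<..<1}"
  shows "(FF B M has_field_derivative (\<Sum>s. diffs (NN B M) s * q^s)) (at q)"
  unfolding FF_def[abs_def]
  by (rule termdiffs_strong'[where K=1]) (use NN_summable[OF assms(1)] assms(2) in auto)

lemma QQ_FF:
  assumes "finite B" "q \<in> {0<..<1}"
  shows "QQ B q M = (1-q)^card B * q * (\<Sum>s. diffs (NN B M) s * q^s)"
proof -
  have sd: "summable (\<lambda>s. diffs (NN B M) s * q^s)"
    by (rule termdiff_converges[where K=1]) (use NN_summable[OF assms(1)] assms(2) in auto)
  have "(\<lambda>s. (1-q)^card B * q * (diffs (NN B M) s * q^s)) sums ((1-q)^card B * q * (\<Sum>s. diffs (NN B M) s * q^s))"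
    by (intro sums_mult summable_sums sd)
  hence "(\<lambda>s. real (Suc s) * (NN B M (Suc s) * ((1-q)^card B * q^(Suc s)))) sums ((1-q)^card B * q * (\<Sum>s. diffs (NN B M) s * q^s))"
    by (simp add: diffs_def algebra_simps)
  hence "(\<lambda>s. real s * (NN B M s * ((1-q)^card B * q^s))) sums ((1-q)^card B * q * (\<Sum>s. diffs (NN B M) s * q^s))"
    by (subst (asm) sums_Suc_iff) simp
  thus ?thesis using QQ_sums[OF assms] sums_unique2 by blast
qed


definition nuu :: "'b set \<Rightarrow> ('b \<Rightarrow> nat) set \<Rightarrow> real \<Rightarrow> real" where
  "nuu B M z = (1-z)^card B * FF B M z"

definition DD :: "'b set \<Rightarrow> ('b \<Rightarrow> nat) set \<Rightarrow> real \<Rightarrow> real" where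
  "DD B M z = (\<Sum>s. diffs (NN B M) s * z^s)"

lemma nuu_PP: "finite B \<Longrightarrow> q \<in> {0<..<1} \<Longrightarrow> nuu B M q = PP B q M"
  by (simp add: nuu_def PP_FF)

lemma nuu_deriv:
  assumes "finite B" "q \<in> {0<..<1}"
  shows "(nuu B M has_real_derivative (- (real (card B) * (1-q)^(card B - 1)) * FF B M q + (1-q)^card B * DD B M q)) (at q)"
proof -
  have d: "(FF B M has_real_derivative DD B M q) (at q)"
    unfolding DD_def by (rule FF_deriv) (use assms in auto)
  have "((\<lambda>z. (1-z)^card B * FF B M z) has_real_derivative
      (real (card B) * (1-q)^(card B - 1) * (0 - 1)) * FF B M q + (1-q)^card B * DD B M q) (at q)"
  proof -
    have d1: "((\<lambda>z. (1-z)^card B) has_real_derivative (real (card B) * (1-q)^(card B - 1) * (0 - 1))) (at q)"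
      by (intro derivative_eq_intros) auto
    show ?thesis using DERIV_mult[OF d1 d] by (simp add: mult.commute)
  qed
  thus ?thesis by (simp add: nuu_def[abs_def])
qed

lemma key_ineq:
  assumes "finite B" "q \<in> {0<..<1}" "upper_set B M" "card B > 0"
  shows "nuu B M q * (1 - nuu B M q) \<le> q * (1-q) * (- (real (card B) * (1-q)^(card B - 1)) * FF B M q + (1-q)^card B * DD B M q)"
proof -
  let ?n = "card B"
  have es: "PP B q M * (1 - PP B q M) \<le> (1-q) * (QQ B q M - real ?n * q/(1-q) * PP B q M)"
    by (rule ES[OF assms(1,2,3)])
  have P: "PP B q M = (1-q)^?n * FF B M q" by (rule PP_FF[OF assms(1,2)])
  have Q: "QQ B q M = (1-q)^?n * q * DD B M q" unfolding DD_def by (rule QQ_FF[OF assms(1,2)])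
  have q1: "1 - q \<noteq> 0" using assms(2) by simp
  have pw: "(1-q)^?n = (1-q) * (1-q)^(?n - 1)" using assms(4) by (cases ?n) auto
  have E1: "(1-q) * (QQ B q M - real ?n * q/(1-q) * PP B q M)
      = q * (1-q) * (- (real ?n * (1-q)^(?n - 1)) * FF B M q + (1-q)^?n * DD B M q)"
    unfolding P Q using q1 by (subst (2) pw) (simp add: field_simps)
  have nP: "nuu B M q = PP B q M" by (rule nuu_PP[OF assms(1,2)])
  show ?thesis unfolding nP using es E1 by linarith
qed

lemma odds_mono:
  assumes B: "finite B" "card B > 0" and up: "upper_set B M"
    and pos: "\<And>q. q \<in> {0<..<1} \<Longrightarrow> 0 < PP B q M \<and> PP B q M < 1"
    and q: "0 < q1" "q1 \<le> q2" "q2 < 1"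
  shows "PP B q1 M / (1 - PP B q1 M) * ((1-q1)/q1) \<le> PP B q2 M / (1 - PP B q2 M) * ((1-q2)/q2)"
proof -
  define phi where "phi z = ln (nuu B M z) - ln (1 - nuu B M z) - ln z + ln (1 - z)" for z
  have "phi q1 \<le> phi q2"
  proof (rule DERIV_nonneg_imp_nondecreasing[OF q(2)])
    fix z assume z: "q1 \<le> z" "z \<le> q2"
    have zi: "z \<in> {0<..<1}" using z q by auto
    define a where "a = nuu B M z"
    define d where "d = - (real (card B) * (1-z)^(card B - 1)) * FF B M z + (1-z)^card B * DD B M z"
    have a01: "0 < a" "a < 1" using pos[OF zi] nuu_PP[OF B(1) zi] by (auto simp: a_def)
    have dn: "(nuu B M has_real_derivative d) (at z)" unfolding d_def by (rule nuu_deriv[OF B(1) zi])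
    have key: "a * (1 - a) \<le> z * (1-z) * d" unfolding a_def d_def by (rule key_ineq[OF B(1) zi up B(2)])
    have z01: "0 < z" "z < 1" using zi by auto
    have h1: "((\<lambda>z. ln (nuu B M z)) has_real_derivative (1/a * d)) (at z)"
      using DERIV_chain2[OF DERIV_ln_divide[of "nuu B M z"] dn] a01 by (simp add: a_def)
    have h2': "((\<lambda>z. 1 - nuu B M z) has_real_derivative (0 - d)) (at z)"
      by (rule DERIV_diff[OF DERIV_const dn])
    have "1 - a > 0" using a01 by simp
    have h2: "((\<lambda>z. ln (1 - nuu B M z)) has_real_derivative (1/(1-a) * (0 - d))) (at z)"
      using DERIV_chain2[OF DERIV_ln_divide[of "1 - nuu B M z"] h2'] a01 by (simp add: a_def)
    have h3: "(ln has_real_derivative (1/z)) (at z)" by (rule DERIV_ln_divide[OF z01(1)])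
    have h4': "((\<lambda>z. 1 - z) has_real_derivative (0 - 1)) (at z)"
      by (rule DERIV_diff[OF DERIV_const DERIV_ident])
    have "1 - z > 0" using z01 by simp
    have h4: "((\<lambda>z. ln (1 - z)) has_real_derivative (1/(1-z) * (0 - 1))) (at z)"
      using DERIV_chain2[OF DERIV_ln_divide[OF \<open>1 - z > 0\<close>] h4'] by simp
    have der0: "(phi has_real_derivative (1/a * d - 1/(1-a) * (0 - d) - 1/z + 1/(1-z) * (0 - 1))) (at z)"
      unfolding phi_def[abs_def] by (rule DERIV_add[OF DERIV_diff[OF DERIV_diff[OF h1 h2] h3] h4])
    have der: "(phi has_real_derivative (d / a - (- d) / (1 - a) - 1 / z + (- 1) / (1 - z))) (at z)"
      using der0 by simp
    have "d / a - (- d) / (1 - a) - 1 / z + (- 1) / (1 - z) = (z*(1-z)*d - a*(1-a)) / (a*(1-a)*z*(1-z))"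
      using a01 z01 by (simp add: field_simps)
    also have "\<dots> \<ge> 0" using key a01 z01 by (intro divide_nonneg_nonneg) auto
    finally show "\<exists>y. (phi has_real_derivative y) (at z) \<and> 0 \<le> y" using der by blast
  qed
  moreover have "exp (phi z) = nuu B M z / (1 - nuu B M z) * ((1-z)/z)" if "z \<in> {0<..<1}" for z
  proof -
    have "0 < nuu B M z" "nuu B M z < 1" using pos[OF that] nuu_PP[OF B(1) that] by auto
    thus ?thesis using that by (simp add: phi_def exp_diff exp_add)
  qed
  ultimately have "nuu B M q1 / (1 - nuu B M q1) * ((1-q1)/q1) \<le> nuu B M q2 / (1 - nuu B M q2) * ((1-q2)/q2)"
    using q by (metis exp_le_cancel_iff greaterThanLessThan_iff order.strict_trans1 order.strict_trans2)
  thus ?thesis using q by (simp add: nuu_PP[OF B(1)])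
qed


locale thr =
  fixes B :: "'b set" and M :: "('b \<Rightarrow> nat) set"
  assumes fin: "finite B" and ne: "B \<noteq> {}" and Mne: "M \<noteq> {}"
    and Msub: "M \<subseteq> B \<rightarrow>\<^sub>E (UNIV::nat set)" and up: "upper_set B M"
    and zero: "zero_fun B \<notin> M"
begin

abbreviation "n \<equiv> card B"

lemma n_pos: "n > 0" using fin ne by (simp add: card_gt_0_iff)

lemma PP_pos: assumes q: "q \<in> {0<..<1}" shows "0 < PP B q M"
proof -
  obtain g where g: "g \<in> M" using Mne by auto
  have gP: "g \<in> B \<rightarrow>\<^sub>E (UNIV::nat set)" using g Msub by auto
  have "0 < pmf (G B q) g" using q by (simp add: pmf_G[OF fin gP q])
  also have "pmf (G B q) g = measure_pmf.prob (G B q) {g}" by (simp add: measure_pmf_single)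
  also have "\<dots> \<le> PP B q M" unfolding PP_def using g by (intro measure_pmf.finite_measure_mono) auto
  finally show ?thesis .
qed

lemma PP_lt1: assumes q: "q \<in> {0<..<1}" shows "PP B q M < 1"
proof -
  have zP: "zero_fun B \<in> B \<rightarrow>\<^sub>E (UNIV::nat set)" by (simp add: zero_fun_def)
  have Sz: "Ssum B (zero_fun B) = 0" by (simp add: Ssum_def zero_fun_def)
  have pz: "0 < pmf (G B q) (zero_fun B)" using q by (simp add: pmf_G[OF fin zP q] Sz)
  have "PP B q M \<le> measure_pmf.prob (G B q) (UNIV - {zero_fun B})"
    unfolding PP_def using zero by (intro measure_pmf.finite_measure_mono) auto
  also have "\<dots> = 1 - pmf (G B q) (zero_fun B)"
    using measure_pmf.prob_compl[of "{zero_fun B}" "G B q"] by (simp add: measure_pmf_single)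
  finally show ?thesis using pz by simp
qed

lemma PP_01: "q \<in> {0<..<1} \<Longrightarrow> 0 < PP B q M \<and> PP B q M < 1"
  using PP_pos PP_lt1 by blast

definition qt :: "real \<Rightarrow> real" where "qt t = t / (real n + t)"

lemma qt_in: "t > 0 \<Longrightarrow> qt t \<in> {0<..<1}"
  using n_pos by (auto simp: qt_def)

lemma nu_G: "t \<ge> 0 \<Longrightarrow> nu B t = G B (qt t)"
proof -
  assume t: "t \<ge> 0"
  have "1 / (1 + t / real n) = 1 - qt t"
    using n_pos t by (simp add: qt_def field_simps)
  thus ?thesis by (simp add: nu_def G_def)
qed

definition Pt :: "real \<Rightarrow> real" where "Pt t = measure_pmf.prob (nu B t) M"

lemma Pt_PP: "t \<ge> 0 \<Longrightarrow> Pt t = PP B (qt t) M"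
  by (simp add: Pt_def PP_def nu_G)

lemma Pt_01: "t > 0 \<Longrightarrow> 0 < Pt t \<and> Pt t < 1"
  using PP_01[OF qt_in] Pt_PP by simp

lemma odds_t:
  assumes "0 < t1" "t1 \<le> t2"
  shows "Pt t1 / (1 - Pt t1) * (real n / t1) \<le> Pt t2 / (1 - Pt t2) * (real n / t2)"
proof -
  have q: "0 < qt t1" "qt t1 \<le> qt t2" "qt t2 < 1"
    using qt_in[of t1] qt_in[of t2] assms n_pos by (auto simp: qt_def frac_le field_simps)
  have "PP B (qt t1) M / (1 - PP B (qt t1) M) * ((1 - qt t1)/qt t1) \<le> PP B (qt t2) M / (1 - PP B (qt t2) M) * ((1 - qt t2)/qt t2)"
    by (rule odds_mono[OF fin n_pos up PP_01 q])
  moreover have "(1 - qt t)/qt t = real n / t" if "t > 0" for t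
  proof -
    have "1 - qt t = real n / (real n + t)" using that n_pos by (simp add: qt_def field_simps)
    thus ?thesis using that n_pos by (simp add: qt_def)
  qed
  ultimately show ?thesis using assms by (simp add: Pt_PP)
qed

definition od :: "real \<Rightarrow> real" where "od t = Pt t / (1 - Pt t)"

lemma od_pos: "t > 0 \<Longrightarrow> od t > 0" using Pt_01[of t] by (simp add: od_def)

lemma odds_scale:
  assumes "0 < t1" "t1 \<le> t2"
  shows "(t2/t1) * od t1 \<le> od t2"
proof -
  have "od t1 * (real n / t1) \<le> od t2 * (real n / t2)" using odds_t[OF assms] by (simp add: od_def)
  hence "(od t1 * (real n / t1)) * (t2 / real n) \<le> (od t2 * (real n / t2)) * (t2 / real n)"
    using assms n_pos by (intro mult_right_mono) auto
  thus ?thesis using assms n_pos by (simp add: field_simps)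
qed

lemma od_ge1: "t > 0 \<Longrightarrow> od t \<ge> 1 \<longleftrightarrow> Pt t \<ge> 1/2"
  using Pt_01[of t] by (simp add: od_def field_simps)

lemma od_le1: "t > 0 \<Longrightarrow> od t \<le> 1 \<longleftrightarrow> Pt t \<le> 1/2"
  using Pt_01[of t] by (simp add: od_def field_simps)

lemma od_eq1: "t > 0 \<Longrightarrow> od t = 1 \<longleftrightarrow> Pt t = 1/2"
proof -
  assume t: "t > 0"
  show ?thesis using od_ge1[OF t] od_le1[OF t] by (auto simp del: od_def)
qed

lemma isCont_Pt:
  assumes "t > 0" shows "isCont (\<lambda>t. nuu B M (qt t)) t"
proof -
  have q: "qt t \<in> {0<..<1}" by (rule qt_in[OF assms])
  have "isCont (nuu B M) (qt t)" using nuu_deriv[OF fin q] by (rule DERIV_isCont)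
  moreover have "isCont qt t" unfolding qt_def[abs_def] using assms n_pos
    by (intro continuous_intros) auto
  ultimately show ?thesis by (rule isCont_o2[rotated])
qed

lemma Pt_nuu: "t > 0 \<Longrightarrow> Pt t = nuu B M (qt t)"
  using Pt_PP[of t] nuu_PP[OF fin qt_in[of t]] by simp

lemma exists_half: "\<exists>t>0. Pt t = 1/2"
proof -
  define c where "c = od 1"
  have c: "c > 0" using od_pos[of 1] by (simp add: c_def)
  define t1 where "t1 = min 1 (1/c)"
  define t2 where "t2 = max 1 (1/c)"
  have t1: "0 < t1" "t1 \<le> 1" using c by (auto simp: t1_def)
  have t2: "1 \<le> t2" "1/c \<le> t2" by (auto simp: t2_def)
  have "(1/t1) * od t1 \<le> c" using odds_scale[OF t1] by (simp add: c_def)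
  hence "od t1 \<le> t1 * c" using t1 by (simp add: field_simps)
  also have "t1 * c \<le> 1" using c by (auto simp: t1_def min_def field_simps)
  finally have a: "Pt t1 \<le> 1/2" using od_le1[OF t1(1)] by simp
  have "t2 * c \<le> od t2" using odds_scale[of 1 t2] t2 by (simp add: c_def)
  moreover have "1 \<le> t2 * c" using t2 c by (simp add: field_simps)
  ultimately have b: "1/2 \<le> Pt t2" using od_ge1[of t2] t2 by simp
  have t12: "t1 \<le> t2" using t1 t2 by simp
  have "\<exists>x\<ge>t1. x \<le> t2 \<and> nuu B M (qt x) = 1/2"
  proof (rule IVT)
    show "nuu B M (qt t1) \<le> 1/2" using a Pt_nuu t1 by simp
    show "1/2 \<le> nuu B M (qt t2)" using b Pt_nuu t2 by simp
    show "t1 \<le> t2" by (rule t12)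
    show "\<forall>x. t1 \<le> x \<and> x \<le> t2 \<longrightarrow> isCont (\<lambda>t. nuu B M (qt t)) x"
      using isCont_Pt t1 by auto
  qed
  then obtain x where "x \<ge> t1" "nuu B M (qt x) = 1/2" by blast
  thus ?thesis using t1 Pt_nuu[of x] by (intro exI[of _ x]) auto
qed

lemma unique_half:
  assumes "t > 0" "t' > 0" "Pt t = 1/2" "Pt t' = 1/2"
  shows "t = t'"
proof (rule ccontr)
  assume "t \<noteq> t'"
  hence "t < t' \<or> t' < t" by auto
  moreover have "od t = 1" "od t' = 1" using od_eq1 assms by auto
  ultimately show False using odds_scale[of t t'] odds_scale[of t' t] assms by (auto simp: field_simps)
qed

lemma geo_thr: "geometric_threshold B M > 0" "Pt (geometric_threshold B M) = 1/2"
proof -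
  have ex: "\<exists>!T. T > 0 \<and> measure_pmf.prob (nu B T) M = 1/2"
    using exists_half unique_half unfolding Pt_def by blast
  have "geometric_threshold B M > 0 \<and> measure_pmf.prob (nu B (geometric_threshold B M)) M = 1/2"
    unfolding geometric_threshold_def by (rule theI'[OF ex])
  thus "geometric_threshold B M > 0" "Pt (geometric_threshold B M) = 1/2" by (auto simp: Pt_def)
qed

end


lemma sum_upd_Suc:
  assumes "finite B" "b \<in> B"
  shows "(\<Sum>c\<in>B. (f(b := Suc (f b))) c) = Suc (\<Sum>c\<in>B. f c)"
proof -
  have "(\<Sum>c\<in>B. (f(b := Suc (f b))) c) = (f(b := Suc (f b))) b + (\<Sum>c\<in>B-{b}. (f(b := Suc (f b))) c)"
    using assms by (rule sum.remove)
  also have "(\<Sum>c\<in>B-{b}. (f(b := Suc (f b))) c) = (\<Sum>c\<in>B-{b}. f c)" by (intro sum.cong) auto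
  also have "(\<Sum>c\<in>B. f c) = f b + (\<Sum>c\<in>B-{b}. f c)" using assms by (rule sum.remove)
  ultimately show ?thesis by simp
qed

lemma double_count:
  assumes fin: "finite B" and up: "upper_set B M"
  shows "(s + card B) * card (M \<inter> level B s) \<le> Suc s * card (M \<inter> level B (Suc s))"
proof -
  define X where "X = (M \<inter> level B s) \<times> B"
  define Y where "Y = (M \<inter> level B (Suc s)) \<times> B"
  define \<phi> where "\<phi> = (\<lambda>(f::'a \<Rightarrow> nat, b). (f(b := Suc (f b)), b))"
  have finX: "finite X" and finY: "finite Y" using level_finite[OF fin] fin by (auto simp: X_def Y_def)
  have inj: "inj_on \<phi> X"
  proof (rule inj_onI)
    fix x y assume "x \<in> X" "y \<in> X" "\<phi> x = \<phi> y"
    then obtain f b f' b' where x: "x = (f,b)" and y: "y = (f',b')" and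
      e: "f(b := Suc (f b)) = f'(b' := Suc (f' b'))" "b = b'"
      by (cases x, cases y) (auto simp: \<phi>_def)
    have "f b = f' b" using fun_cong[OF e(1), of b] e(2) by simp
    hence "f = f'" using e by (auto simp: fun_eq_iff split: if_splits)
    thus "x = y" using x y e(2) by simp
  qed
  have sub: "\<phi> ` X \<subseteq> Y"
  proof
    fix y assume "y \<in> \<phi> ` X"
    then obtain f b where fb: "f \<in> M" "f \<in> level B s" "b \<in> B" and y: "y = (f(b := Suc (f b)), b)"
      by (auto simp: X_def \<phi>_def)
    have fP: "f \<in> B \<rightarrow>\<^sub>E (UNIV::nat set)" using fb by (simp add: level_def)
    have gP: "f(b := Suc (f b)) \<in> B \<rightarrow>\<^sub>E (UNIV::nat set)" using fP fb(3) by (auto simp: PiE_iff extensional_def)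
    have "f(b := Suc (f b)) \<in> M" using up fb(1) gP unfolding upper_set_def by auto
    moreover have "f(b := Suc (f b)) \<in> level B (Suc s)"
      using gP fb(2) sum_upd_Suc[OF fin fb(3), of f] by (simp add: level_def)
    ultimately show "y \<in> Y" using y fb(3) by (simp add: Y_def)
  qed
  have "(s + card B) * card (M \<inter> level B s) = (\<Sum>f\<in>M \<inter> level B s. \<Sum>b\<in>B. Suc (f b))"
  proof -
    have "(\<Sum>b\<in>B. Suc (f b)) = s + card B" if "f \<in> level B s" for f
    proof -
      have "(\<Sum>b\<in>B. Suc (f b)) = (\<Sum>b\<in>B. f b + 1)" by simp
      also have "\<dots> = (\<Sum>b\<in>B. f b) + (\<Sum>b\<in>B. 1)" by (rule sum.distrib)
      also have "(\<Sum>b\<in>B. (1::nat)) = card B" by simp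
      finally show ?thesis using that by (simp add: level_def)
    qed
    thus ?thesis by (simp add: mult.commute)
  qed
  also have "\<dots> = (\<Sum>x\<in>X. case x of (f,b) \<Rightarrow> Suc (f b))"
    unfolding X_def by (simp add: sum.cartesian_product)
  also have "\<dots> = (\<Sum>x\<in>X. (\<lambda>(g,b). g b) (\<phi> x))"
    by (intro sum.cong) (auto simp: \<phi>_def)
  also have "\<dots> = (\<Sum>y\<in>\<phi> ` X. (\<lambda>(g,b). g b) y)"
    by (simp add: sum.reindex[OF inj] o_def)
  also have "\<dots> \<le> (\<Sum>y\<in>Y. (\<lambda>(g,b). g b) y)"
    by (rule sum_mono2[OF finY sub]) auto
  also have "\<dots> = (\<Sum>g\<in>M \<inter> level B (Suc s). \<Sum>b\<in>B. g b)"
    unfolding Y_def by (simp add: sum.cartesian_product)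
  also have "\<dots> = Suc s * card (M \<inter> level B (Suc s))"
    by (simp add: level_def)
  finally show ?thesis .
qed


context thr
begin

lemma level_AE: "measure_pmf.prob (G B q) (level B s) = measure_pmf.prob (G B q) {f. Ssum B f = s}"
proof (rule measure_pmf.finite_measure_eq_AE)
  show "AE x in G B q. (x \<in> level B s) = (x \<in> {f. Ssum B f = s})"
    by (subst AE_measure_pmf_iff) (auto dest!: set_pmf_G[OF fin] simp: level_def Ssum_def)
qed auto

lemma card_level: "card (level B s) = (s + n - 1) choose s"
proof -
  define q :: real where "q = 1/2"
  have q: "q \<in> {0<..<1}" by (simp add: q_def)
  have qne: "q \<noteq> 0" "q \<noteq> 1" by (auto simp: q_def)
  have "measure_pmf.prob (G B q) (level B s) = real (card (level B s)) * ((1-q)^n * q^s)"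
    using measure_level[OF fin q, of UNIV s] by simp
  moreover have "measure_pmf.prob (G B q) (level B s) = real ((s + n - 1) choose s) * ((1-q)^n * q^s)"
  proof -
    have "measure_pmf.prob (G B q) {f. Ssum B f = s} = measure_pmf.prob (map_pmf (Ssum B) (G B q)) {s}"
      by (simp add: vimage_def)
    also have "\<dots> = pmf (neg_binomial_pmf n (1-q)) s" by (simp add: map_S_G[OF fin] measure_pmf_single)
    also have "\<dots> = real ((s + n - 1) choose s) * ((1-q)^n * q^s)"
      using q by (subst pmf_neg_binomial) (auto simp: mult_ac)
    finally show ?thesis by (simp add: level_AE)
  qed
  ultimately have e: "real (card (level B s)) * ((1-q)^n * q^s) = real ((s + n - 1) choose s) * ((1-q)^n * q^s)" by (rule trans[OF sym])
  have "(1-q)^n * q^s \<noteq> 0" using qne by simp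
  hence "real (card (level B s)) = real ((s + n - 1) choose s)" using e by (metis mult_right_cancel)
  thus ?thesis by (simp only: of_nat_eq_iff)
qed

lemma level_ne: "level B s \<noteq> {}"
proof -
  have "0 < (s + n - 1) choose s" using n_pos by (simp add: zero_less_binomial_iff)
  hence "card (level B s) > 0" by (simp add: card_level)
  thus ?thesis by auto
qed

lemma card_level_Suc: "Suc s * card (level B (Suc s)) = (s + n) * card (level B s)"
proof -
  obtain m where m: "n = Suc m" using n_pos by (cases n) auto
  have "Suc (s + m) * ((s + m) choose s) = (Suc (s + m) choose Suc s) * Suc s"
    by (rule Suc_times_binomial_eq)
  thus ?thesis by (simp add: card_level m mult.commute)
qed

definition aa :: "nat \<Rightarrow> real" where "aa s = measure_pmf.prob (mu B s) M"

lemma aa_eq: "aa s = real (card (M \<inter> level B s)) / real (card (level B s))"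
proof -
  have "aa s = real (card (level B s \<inter> M)) / real (card (level B s))"
    unfolding aa_def mu_def using level_ne level_finite[OF fin]
    by (subst measure_pmf_of_set) auto
  thus ?thesis by (simp add: Int_commute)
qed

lemma aa_01: "0 \<le> aa s" "aa s \<le> 1" by (auto simp: aa_def)

lemma aa_Suc: "aa s \<le> aa (Suc s)"
proof -
  define Ns where "Ns = real (card (M \<inter> level B s))"
  define Ns' where "Ns' = real (card (M \<inter> level B (Suc s)))"
  define Ls where "Ls = real (card (level B s))"
  define Ls' where "Ls' = real (card (level B (Suc s)))"
  have Lpos: "Ls > 0" "Ls' > 0" using level_ne level_finite[OF fin] by (auto simp: Ls_def Ls'_def card_gt_0_iff)
  have dc: "(real s + real n) * Ns \<le> (real s + 1) * Ns'"
    using double_count[OF fin up, of s] unfolding Ns_def Ns'_def by (metis of_nat_add of_nat_le_iff of_nat_mult of_nat_Suc add.commute)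
  have cl: "(real s + 1) * Ls' = (real s + real n) * Ls"
    using card_level_Suc[of s] unfolding Ls_def Ls'_def by (metis of_nat_add of_nat_mult of_nat_Suc add.commute)
  have "Ns / Ls = ((real s + real n) * Ns) / ((real s + real n) * Ls)" using n_pos by simp
  also have "\<dots> \<le> ((real s + 1) * Ns') / ((real s + real n) * Ls)"
    using Lpos n_pos dc by (intro divide_right_mono) auto
  also have "\<dots> = ((real s + 1) * Ns') / ((real s + 1) * Ls')" by (simp add: cl)
  also have "\<dots> = Ns' / Ls'" by simp
  finally show ?thesis by (simp add: aa_eq Ns_def Ns'_def Ls_def Ls'_def)
qed

lemma aa_mono: "s \<le> s' \<Longrightarrow> aa s \<le> aa s'"
  by (induction s' rule: dec_induct) (auto intro: order_trans aa_Suc)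

end


context thr
begin

definition w :: "real \<Rightarrow> nat \<Rightarrow> real" where "w q r = (1-q)^n * q^r"

lemma w_nonneg: "q \<in> {0<..<1} \<Longrightarrow> w q r \<ge> 0" by (simp add: w_def)

lemma NN_M: "NN B M r = aa r * real (card (level B r))"
proof -
  have "real (card (level B r)) > 0" using level_ne level_finite[OF fin] by (auto simp: card_gt_0_iff)
  thus ?thesis by (simp add: aa_eq NN_def)
qed

lemma NN_ge: "NN B {f. s \<le> Ssum B f} r = (if s \<le> r then real (card (level B r)) else 0)"
proof -
  have "{f. s \<le> Ssum B f} \<inter> level B r = (if s \<le> r then level B r else {})"
    by (auto simp: level_def Ssum_def)
  thus ?thesis by (simp add: NN_def)
qed

lemma NN_gt: "NN B {f. s < Ssum B f} r = (if s < r then real (card (level B r)) else 0)"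
proof -
  have "{f. s < Ssum B f} \<inter> level B r = (if s < r then level B r else {})"
    by (auto simp: level_def Ssum_def)
  thus ?thesis by (simp add: NN_def)
qed

lemma NN_UNIV: "NN B UNIV r = real (card (level B r))" by (simp add: NN_def)

lemma NN_M_le: "NN B M r \<le> real (card (level B r))"
  using aa_01 NN_M by (simp add: mult_left_le_one_le)

lemma PP_lower:
  assumes q: "q \<in> {0<..<1}"
  shows "aa s * PP B q {f. s \<le> Ssum B f} \<le> PP B q M"
proof (rule sums_le)
  show "(\<lambda>r. aa s * (NN B {f. s \<le> Ssum B f} r * ((1-q)^n * q^r))) sums (aa s * PP B q {f. s \<le> Ssum B f})"
    by (intro sums_mult PP_sums[OF fin q])
  show "(\<lambda>r. NN B M r * ((1-q)^n * q^r)) sums PP B q M" by (rule PP_sums[OF fin q])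
  fix r
  have wn: "(1-q)^n * q^r \<ge> 0" using q by simp
  have "aa s * NN B {f. s \<le> Ssum B f} r \<le> NN B M r"
    using aa_mono[of s r] aa_01 by (auto simp: NN_ge NN_M intro: mult_right_mono)
  thus "aa s * (NN B {f. s \<le> Ssum B f} r * ((1-q)^n * q^r)) \<le> NN B M r * ((1-q)^n * q^r)"
    using wn by (metis mult.assoc mult_right_mono)
qed

lemma PP_UNIV: "PP B q UNIV = 1" by (simp add: PP_def)

lemma PP_upper:
  assumes q: "q \<in> {0<..<1}"
  shows "PP B q M \<le> aa s + PP B q {f. s < Ssum B f}"
proof (rule sums_le)
  show "(\<lambda>r. NN B M r * ((1-q)^n * q^r)) sums PP B q M" by (rule PP_sums[OF fin q])
  have "(\<lambda>r. aa s * (NN B UNIV r * ((1-q)^n * q^r))) sums (aa s * PP B q UNIV)"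
    by (intro sums_mult PP_sums[OF fin q])
  hence "(\<lambda>r. aa s * (NN B UNIV r * ((1-q)^n * q^r)) + NN B {f. s < Ssum B f} r * ((1-q)^n * q^r)) sums (aa s * PP B q UNIV + PP B q {f. s < Ssum B f})"
    by (intro sums_add PP_sums[OF fin q])
  thus "(\<lambda>r. aa s * (NN B UNIV r * ((1-q)^n * q^r)) + NN B {f. s < Ssum B f} r * ((1-q)^n * q^r)) sums (aa s + PP B q {f. s < Ssum B f})"
    by (simp add: PP_UNIV)
  fix r
  have wn: "(1-q)^n * q^r \<ge> 0" using q by simp
  have L0: "real (card (level B r)) \<ge> 0" by simp
  have "NN B M r \<le> aa s * NN B UNIV r + NN B {f. s < Ssum B f} r"
  proof (cases "r \<le> s")
    case True
    thus ?thesis using aa_mono[OF True] by (auto simp: NN_gt NN_M NN_UNIV intro: mult_right_mono)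
  next
    case False
    have "aa s * real (card (level B r)) \<ge> 0" using aa_01(1)[of s] L0 by simp
    thus ?thesis using False NN_M_le[of r] by (auto simp: NN_gt NN_UNIV)
  qed
  hence "NN B M r * ((1-q)^n * q^r) \<le> (aa s * NN B UNIV r + NN B {f. s < Ssum B f} r) * ((1-q)^n * q^r)"
    using wn by (rule mult_right_mono)
  thus "NN B M r * ((1-q)^n * q^r) \<le> aa s * (NN B UNIV r * ((1-q)^n * q^r)) + NN B {f. s < Ssum B f} r * ((1-q)^n * q^r)"
    by (simp add: algebra_simps)
qed

lemma tail:
  assumes t: "t > 0" and d: "d > 0"
  shows "PP B (qt t) {f. d \<le> \<bar>real (Ssum B f) - t\<bar>} \<le> t * (1 + t / real n) / d^2"
proof -
  let ?q = "qt t"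
  have p: "1 - ?q \<in> {0<..1}" using qt_in[OF t] by auto
  have nt: "real n + t > 0" "real n > 0" using t n_pos by auto
  have qe: "qt t = t / (real n + t)" "1 - qt t = real n / (real n + t)"
    using nt by (auto simp: qt_def field_simps)
  have d1: "t * real n + real n * real n > 0" "t * (real n * real n) + real n * (real n * real n) > 0"
    using nt t by (auto intro!: add_pos_pos mult_pos_pos)
  have mu: "real n * qt t / (1 - qt t) = t" unfolding qe using nt d1 by (simp add: field_simps)
  have var: "real n * qt t / (1 - qt t)^2 = t * (1 + t / real n)"
    unfolding qe using nt d1 by (simp add: field_simps power2_eq_square)
  have "PP B ?q {f. d \<le> \<bar>real (Ssum B f) - t\<bar>} = measure_pmf.prob (map_pmf (Ssum B) (G B ?q)) {x. d \<le> \<bar>real x - t\<bar>}"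
    by (simp add: PP_def vimage_def)
  also have "\<dots> = measure_pmf.prob (neg_binomial_pmf n (1 - ?q)) {x. d \<le> \<bar>real x - real n * (1 - (1 - ?q)) / (1 - ?q)\<bar>}"
    by (simp add: map_S_G[OF fin] mu)
  also have "\<dots> \<le> (real n * (1 - (1 - ?q)) / (1 - ?q)^2) / d^2"
    by (rule nb_tail[OF p d])
  also have "real n * (1 - (1 - ?q)) / (1 - ?q)^2 = t * (1 + t / real n)" using var by simp
  finally show ?thesis .
qed

end


context thr
begin

abbreviation "T' \<equiv> geometric_threshold B M"

lemma nat_ceil_ge: "x \<le> real (nat \<lceil>x\<rceil>)"
proof (cases "x \<le> 0")
  case True
  thus ?thesis by (meson of_nat_0_le_iff order.trans)
next
  case False
  hence "real (nat \<lceil>x\<rceil>) = real_of_int \<lceil>x\<rceil>" by simp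
  thus ?thesis by (simp add: le_of_int_ceiling)
qed

lemma nat_ceil_le: "x \<ge> 0 \<Longrightarrow> real (nat \<lceil>x\<rceil>) \<le> x + 1"
proof -
  assume x: "x \<ge> 0"
  have "real (nat \<lceil>x\<rceil>) = real_of_int \<lceil>x\<rceil>" using x by simp
  also have "\<dots> \<le> x + 1" by (rule of_int_ceiling_le_add_one)
  finally show ?thesis .
qed


lemma Pt_PPq: "t > 0 \<Longrightarrow> Pt t = PP B (qt t) M" using Pt_PP by simp

lemma ut_eq: "uniform_threshold B M = (LEAST T. 1/2 \<le> aa T)"
  by (simp add: uniform_threshold_def aa_def)

lemma upper_T:
  assumes e: "0 < \<epsilon>" "\<epsilon> \<le> 1"
  assumes small: "(1 / ((1+\<epsilon>)*T') + 1 / real n) / \<epsilon>^2 \<le> \<epsilon> / (2*(2+\<epsilon>))"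
  shows "real (uniform_threshold B M) \<le> (1+\<epsilon>)^2 * T' + 1" "1/2 \<le> aa (uniform_threshold B M)"
proof -
  define t where "t = (1+\<epsilon>) * T'"
  define s where "s = nat \<lceil>(1+\<epsilon>) * t\<rceil>"
  have T'pos: "T' > 0" by (rule geo_thr(1))
  have t: "t > 0" using T'pos e by (simp add: t_def)
  have od1: "od T' = 1" using od_eq1[OF T'pos] geo_thr(2) by simp
  have tge: "T' \<le> t" using T'pos e by (simp add: t_def)
  have "(t / T') * od T' \<le> od t" by (rule odds_scale[OF T'pos tge])
  hence "1 + \<epsilon> \<le> od t" using od1 T'pos by (simp add: t_def)
  hence P1: "(1+\<epsilon>)/(2+\<epsilon>) \<le> Pt t" using Pt_01[OF t] e by (simp add: od_def field_simps)
  have "Pt t \<le> aa s + PP B (qt t) {f. s < Ssum B f}"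
    using PP_upper[OF qt_in[OF t]] Pt_PPq[OF t] by simp
  moreover have "PP B (qt t) {f. s < Ssum B f} \<le> PP B (qt t) {f. \<epsilon> * t \<le> \<bar>real (Ssum B f) - t\<bar>}"
  proof -
    have "{f. s < Ssum B f} \<subseteq> {f. \<epsilon> * t \<le> \<bar>real (Ssum B f) - t\<bar>}"
    proof
      fix f assume "f \<in> {f. s < Ssum B f}"
      hence "real s < real (Ssum B f)" by simp
      moreover have "(1+\<epsilon>) * t \<le> real s" unfolding s_def by (rule nat_ceil_ge)
      ultimately show "f \<in> {f. \<epsilon> * t \<le> \<bar>real (Ssum B f) - t\<bar>}" by (simp add: algebra_simps)
    qed
    thus ?thesis unfolding PP_def by (rule measure_pmf.finite_measure_mono) auto
  qed
  moreover have "PP B (qt t) {f. \<epsilon> * t \<le> \<bar>real (Ssum B f) - t\<bar>} \<le> t * (1 + t / real n) / (\<epsilon> * t)^2"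
    using tail[OF t] e t by simp
  moreover have "t * (1 + t / real n) / (\<epsilon> * t)^2 = (1 / t + 1 / real n) / \<epsilon>^2"
    using t e n_pos by (simp add: field_simps power2_eq_square)
  ultimately have "(1+\<epsilon>)/(2+\<epsilon>) - \<epsilon> / (2*(2+\<epsilon>)) \<le> aa s"
    using P1 small by (simp add: t_def)
  moreover have "(1+\<epsilon>)/(2+\<epsilon>) - \<epsilon> / (2*(2+\<epsilon>)) = 1/2"
  proof -
    have p: "2 + \<epsilon> \<noteq> 0" using e by simp
    have e1: "(\<epsilon>/2)/(2+\<epsilon>) = \<epsilon> / (2*(2+\<epsilon>))" by simp
    have e2: "(1+\<epsilon> - \<epsilon>/2)/(2+\<epsilon>) = (1+\<epsilon>)/(2+\<epsilon>) - (\<epsilon>/2)/(2+\<epsilon>)" by (rule diff_divide_distrib)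
    have "(1+\<epsilon>)/(2+\<epsilon>) - \<epsilon> / (2*(2+\<epsilon>)) = (1+\<epsilon> - \<epsilon>/2)/(2+\<epsilon>)"
      by (simp only: e2 e1)
    also have "1+\<epsilon> - \<epsilon>/2 = (2+\<epsilon>)/2" by simp
    also have "((2+\<epsilon>)/2)/(2+\<epsilon>) = 1/2" using p by simp
    finally show ?thesis .
  qed
  ultimately have as: "1/2 \<le> aa s" by linarith
  have le: "uniform_threshold B M \<le> s" unfolding ut_eq by (rule Least_le[of "\<lambda>T. 1/2 \<le> aa T", OF as])
  show "1/2 \<le> aa (uniform_threshold B M)" unfolding ut_eq by (rule LeastI[of "\<lambda>T. 1/2 \<le> aa T", OF as])
  have "real s \<le> (1+\<epsilon>) * t + 1" unfolding s_def using t e by (intro nat_ceil_le) simp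
  thus "real (uniform_threshold B M) \<le> (1+\<epsilon>)^2 * T' + 1"
  proof -
    have "real (uniform_threshold B M) \<le> real s" using le by simp
    also have "\<dots> \<le> (1+\<epsilon>) * t + 1" by fact
    also have "(1+\<epsilon>) * t = (1+\<epsilon>)^2 * T'" by (simp add: t_def power2_eq_square)
    finally show ?thesis .
  qed
qed

lemma lower_T:
  assumes e: "0 < \<epsilon>" "\<epsilon> \<le> 1"
  assumes small: "(1 / (T' / (1+\<epsilon>)) + 1 / real n) * (1+\<epsilon>)^2 / \<epsilon>^2 \<le> \<epsilon> / (2*(2+\<epsilon>))"
  assumes ex: "\<exists>T. 1/2 \<le> aa T"
  shows "T' / (1+\<epsilon>)^2 < real (uniform_threshold B M)"
proof -
  define t where "t = T' / (1+\<epsilon>)"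
  define s where "s = nat \<lfloor>t / (1+\<epsilon>)\<rfloor>"
  define \<delta> where "\<delta> = \<epsilon> / (2*(2+\<epsilon>))"
  have T'pos: "T' > 0" by (rule geo_thr(1))
  have t: "t > 0" using T'pos e by (simp add: t_def)
  have od1: "od T' = 1" using od_eq1[OF T'pos] geo_thr(2) by simp
  have tle: "t \<le> T'" using T'pos e by (simp add: t_def field_simps)
  have "(T' / t) * od t \<le> od T'" by (rule odds_scale[OF t tle])
  moreover have "T' / t = 1 + \<epsilon>" using T'pos e by (simp add: t_def)
  ultimately have "(1 + \<epsilon>) * od t \<le> 1" using od1 by simp
  hence P1: "Pt t \<le> 1/(2+\<epsilon>)" using Pt_01[OF t] e by (simp add: od_def field_simps)
  define d where "d = t * \<epsilon> / (1+\<epsilon>)"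
  have d: "d > 0" using t e by (simp add: d_def)
  have sle: "real s \<le> t / (1+\<epsilon>)"
  proof -
    have "t / (1+\<epsilon>) \<ge> 0" using t e by simp
    hence "real s = real_of_int \<lfloor>t / (1+\<epsilon>)\<rfloor>" by (simp add: s_def)
    thus ?thesis by simp
  qed
  have "PP B (qt t) {f. Ssum B f < s} \<le> PP B (qt t) {f. d \<le> \<bar>real (Ssum B f) - t\<bar>}"
  proof -
    have "{f. Ssum B f < s} \<subseteq> {f. d \<le> \<bar>real (Ssum B f) - t\<bar>}"
    proof
      fix f assume "f \<in> {f. Ssum B f < s}"
      hence "real (Ssum B f) < real s" by simp
      moreover have "t / (1+\<epsilon>) = t - d" using e by (simp add: d_def field_simps)
      ultimately show "f \<in> {f. d \<le> \<bar>real (Ssum B f) - t\<bar>}" using sle by simp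
    qed
    thus ?thesis unfolding PP_def by (rule measure_pmf.finite_measure_mono) auto
  qed
  also have "\<dots> \<le> t * (1 + t / real n) / d^2" by (rule tail[OF t d])
  also have "t * (1 + t / real n) / d^2 = (1 / t + 1 / real n) * (1+\<epsilon>)^2 / \<epsilon>^2"
    using t e n_pos by (simp add: d_def field_simps power2_eq_square)
  also have "\<dots> \<le> \<delta>" using small by (simp add: t_def \<delta>_def)
  finally have tl: "PP B (qt t) {f. Ssum B f < s} \<le> \<delta>" .
  have "PP B (qt t) {f. s \<le> Ssum B f} = 1 - PP B (qt t) {f. Ssum B f < s}"
  proof -
    have "{f. s \<le> Ssum B f} = UNIV - {f. Ssum B f < s}" by auto
    thus ?thesis unfolding PP_def using measure_pmf.prob_compl[of "{f. Ssum B f < s}" "G B (qt t)"] by simp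
  qed
  hence Pg: "1 - \<delta> \<le> PP B (qt t) {f. s \<le> Ssum B f}" using tl by simp
  have low: "aa s * PP B (qt t) {f. s \<le> Ssum B f} \<le> Pt t"
    using PP_lower[OF qt_in[OF t]] Pt_PPq[OF t] by simp
  have dpos: "0 < 1 - \<delta>" using e by (simp add: \<delta>_def field_simps)
  have "aa s * (1 - \<delta>) \<le> aa s * PP B (qt t) {f. s \<le> Ssum B f}"
    using Pg aa_01 by (intro mult_left_mono) auto
  hence "aa s * (1 - \<delta>) \<le> 1/(2+\<epsilon>)" using low P1 by linarith
  moreover have "(1/(2+\<epsilon>)) < (1/2) * (1 - \<delta>)"
  proof -
    have "0 < \<epsilon> * \<epsilon> + \<epsilon> * 2" using e by (simp add: add_pos_pos)
    thus ?thesis using e by (simp add: \<delta>_def field_simps)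
  qed
  ultimately have "aa s * (1 - \<delta>) < (1/2) * (1 - \<delta>)" by linarith
  hence as: "aa s < 1/2" using dpos by (simp add: mult_less_cancel_right)
  have UT: "1/2 \<le> aa (uniform_threshold B M)"
    unfolding ut_eq using ex by (rule LeastI_ex)
  have "s < uniform_threshold B M"
  proof (rule ccontr)
    assume "\<not> s < uniform_threshold B M"
    hence "aa (uniform_threshold B M) \<le> aa s" by (intro aa_mono) simp
    thus False using as UT by simp
  qed
  hence "real s + 1 \<le> real (uniform_threshold B M)" by simp
  moreover have "t / (1+\<epsilon>) < real s + 1"
  proof -
    have "t / (1+\<epsilon>) \<ge> 0" using t e by simp
    hence "real s = real_of_int \<lfloor>t / (1+\<epsilon>)\<rfloor>" by (simp add: s_def)
    thus ?thesis by linarith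
  qed
  moreover have "t / (1+\<epsilon>) = T' / (1+\<epsilon>)^2" by (simp add: t_def power2_eq_square)
  ultimately show ?thesis by linarith
qed

end


lemma ratio_bounds:
  fixes T T' \<epsilon> :: real
  assumes e: "0 < \<epsilon>" "\<epsilon> \<le> 1" and T': "T' > 0" "1 / T' \<le> \<epsilon>"
    and up: "T \<le> (1+\<epsilon>)^2 * T' + 1" and lo: "T' / (1+\<epsilon>)^2 < T"
  shows "\<bar>T / T' - 1\<bar> \<le> 4 * \<epsilon>"
proof -
  have "T / T' \<le> ((1+\<epsilon>)^2 * T' + 1) / T'" using up T' by (intro divide_right_mono) auto
  also have "\<dots> = (1+\<epsilon>)^2 + 1 / T'" using T' by (simp add: field_simps)
  also have "\<dots> \<le> 1 + 4 * \<epsilon>"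
  proof -
    have "\<epsilon> * \<epsilon> \<le> \<epsilon>" using e by (simp add: mult_left_le)
    moreover have "(1+\<epsilon>)^2 + 1 / T' = 1 + 2*\<epsilon> + \<epsilon>*\<epsilon> + 1/T'" by (simp add: power2_eq_square algebra_simps)
    ultimately show ?thesis using T'(2) by linarith
  qed
  finally have u: "T / T' \<le> 1 + 4 * \<epsilon>" .
  have "1 - 2 * \<epsilon> \<le> 1 / (1+\<epsilon>)^2"
  proof -
    have "(1 - 2 * \<epsilon>) * (1+\<epsilon>)^2 \<le> 1"
      using e by (simp add: power2_eq_square algebra_simps)
    thus ?thesis using e by (simp add: field_simps)
  qed
  also have "1 / (1+\<epsilon>)^2 = (T' / (1+\<epsilon>)^2) / T'" using T' by simp
  also have "\<dots> < T / T'" using lo T' by (intro divide_strict_right_mono) auto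
  finally have l: "1 - 2 * \<epsilon> < T / T'" .
  show ?thesis using u l e by auto
qed

lemma small_conds:
  fixes \<epsilon> T' N :: real
  assumes e: "0 < \<epsilon>" "\<epsilon> \<le> 1" and T': "T' > 0" and N: "N > 0"
    and a: "1 / T' \<le> \<epsilon>^3/72" and b: "1 / N \<le> \<epsilon>^3/72"
  shows "(1 / ((1+\<epsilon>)*T') + 1 / N) / \<epsilon>^2 \<le> \<epsilon> / (2*(2+\<epsilon>))"
    and "(1 / (T' / (1+\<epsilon>)) + 1 / N) * (1+\<epsilon>)^2 / \<epsilon>^2 \<le> \<epsilon> / (2*(2+\<epsilon>))"
    and "1 / T' \<le> \<epsilon>"
proof -
  define c where "c = \<epsilon>^3/72"
  have c: "c > 0" using e by (simp add: c_def)
  have e3: "\<epsilon>^3 \<le> \<epsilon>" using e by (simp add: power3_eq_cube mult_le_one mult_left_le)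
  have key: "\<epsilon> / 6 \<le> \<epsilon> / (2*(2+\<epsilon>))" using e by (intro divide_left_mono) auto
  have ce: "c / \<epsilon>^2 = \<epsilon> / 72" using e by (simp add: c_def power2_eq_square power3_eq_cube)
  have a1: "1 / ((1+\<epsilon>)*T') \<le> c"
  proof -
    have "1 / ((1+\<epsilon>)*T') \<le> 1 / T'" using e T' by (intro divide_left_mono) (auto simp: mult_pos_pos)
    thus ?thesis using a by (simp add: c_def)
  qed
  have "(1 / ((1+\<epsilon>)*T') + 1 / N) / \<epsilon>^2 \<le> (2*c) / \<epsilon>^2"
    using a1 b e by (intro divide_right_mono) (auto simp: c_def)
  also have "\<dots> = 2 * (c / \<epsilon>^2)" by simp
  also have "\<dots> = \<epsilon> / 36" unfolding ce by simp
  also have "\<dots> \<le> \<epsilon> / 6" using e by simp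
  finally show "(1 / ((1+\<epsilon>)*T') + 1 / N) / \<epsilon>^2 \<le> \<epsilon> / (2*(2+\<epsilon>))" using key by linarith
  have a2: "1 / (T' / (1+\<epsilon>)) \<le> 2 * c"
  proof -
    have "1 / (T' / (1+\<epsilon>)) = (1+\<epsilon>) * (1 / T')" by simp
    also have "\<dots> \<le> 2 * c" using e a T' by (intro mult_mono) (auto simp: c_def)
    finally show ?thesis .
  qed
  have sq: "(1+\<epsilon>)^2 \<le> 2^2" using e by (intro power_mono) auto
  have b': "1 / N \<le> c" using b by (simp add: c_def)
  have s3: "1 / (T' / (1+\<epsilon>)) + 1 / N \<le> 3 * c" using a2 b' by linarith
  have "(1 / (T' / (1+\<epsilon>)) + 1 / N) * (1+\<epsilon>)^2 \<le> (3 * c) * 4"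
    using s3 sq c by (intro mult_mono) auto
  hence "(1 / (T' / (1+\<epsilon>)) + 1 / N) * (1+\<epsilon>)^2 / \<epsilon>^2 \<le> (3 * c) * 4 / \<epsilon>^2"
    using e by (intro divide_right_mono) auto
  also have "(3 * c) * 4 / \<epsilon>^2 = 12 * (c / \<epsilon>^2)" by simp
  also have "\<dots> = \<epsilon> / 6" unfolding ce by simp
  finally show "(1 / (T' / (1+\<epsilon>)) + 1 / N) * (1+\<epsilon>)^2 / \<epsilon>^2 \<le> \<epsilon> / (2*(2+\<epsilon>))" using key by linarith
  have "\<epsilon>^3/72 \<le> \<epsilon>^3" using e by simp
  thus "1 / T' \<le> \<epsilon>" using a e3 by linarith
qed

theorem theorem11:
  fixes B :: "nat \<Rightarrow> 'b set" and M :: "nat \<Rightarrow> ('b \<Rightarrow> nat) set"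
  assumes "\<And>i. finite (B i)" and "\<And>i. B i \<noteq> {}"
    and "\<And>i. M i \<noteq> {}" and "\<And>i. M i \<subseteq> B i \<rightarrow>\<^sub>E (UNIV::nat set)"
    and "\<And>i. upper_set (B i) (M i)"
    and "\<And>i. zero_fun (B i) \<notin> M i"
    and "filterlim (\<lambda>i. card (B i)) at_top sequentially"
    and "filterlim (\<lambda>i. geometric_threshold (B i) (M i)) at_top sequentially"
  shows "(\<lambda>i. real (uniform_threshold (B i) (M i)) / geometric_threshold (B i) (M i))
           \<longlonglongrightarrow> 1"
proof -
  have thr: "thr (B i) (M i)" for i by unfold_locales (use assms in auto)
  show ?thesis
  proof (rule tendstoI)
    fix e :: real assume e: "e > 0"
    define \<epsilon> where "\<epsilon> = min 1 (e/8)"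
    have eps: "0 < \<epsilon>" "\<epsilon> \<le> 1" "4 * \<epsilon> < e" using e by (auto simp: \<epsilon>_def)
    define c where "c = \<epsilon>^3/72"
    have c: "c > 0" using eps by (simp add: c_def)
    have ev1: "eventually (\<lambda>i. nat \<lceil>1/c\<rceil> \<le> card (B i)) sequentially"
      using assms(7) unfolding filterlim_at_top by blast
    have ev2: "eventually (\<lambda>i. 1/c \<le> geometric_threshold (B i) (M i)) sequentially"
      using assms(8) by (simp add: filterlim_at_top)
    show "eventually (\<lambda>i. dist (real (uniform_threshold (B i) (M i)) / geometric_threshold (B i) (M i)) 1 < e) sequentially"
      using ev1 ev2
    proof eventually_elim
      case (elim i)
      interpret thr "B i" "M i" by (rule thr)
      let ?T = "geometric_threshold (B i) (M i)"
      have Tpos: "?T > 0" by (rule geo_thr(1))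
      have npos: "real (card (B i)) > 0" using n_pos by simp
      have "1/c \<le> real (nat \<lceil>1/c\<rceil>)" by (rule nat_ceil_ge)
      also have "\<dots> \<le> real (card (B i))" using elim(1) by simp
      finally have n1: "1/c \<le> real (card (B i))" .
      have a: "1 / ?T \<le> \<epsilon>^3/72"
      proof -
        have "1 / ?T \<le> 1 / (1/c)" using elim(2) c Tpos by (intro divide_left_mono) auto
        thus ?thesis by (simp add: c_def)
      qed
      have b: "1 / real (card (B i)) \<le> \<epsilon>^3/72"
      proof -
        have "1 / real (card (B i)) \<le> 1 / (1/c)" using n1 c npos by (intro divide_left_mono) auto
        thus ?thesis by (simp add: c_def)
      qed
      note sc = small_conds[OF eps(1,2) Tpos npos a b]
      have up1: "real (uniform_threshold (B i) (M i)) \<le> (1+\<epsilon>)^2 * ?T + 1"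
        and up2: "1/2 \<le> aa (uniform_threshold (B i) (M i))"
        using upper_T[OF eps(1,2) sc(1)] by auto
      have lo: "?T / (1+\<epsilon>)^2 < real (uniform_threshold (B i) (M i))"
        using lower_T[OF eps(1,2) sc(2)] up2 by blast
      have "\<bar>real (uniform_threshold (B i) (M i)) / ?T - 1\<bar> \<le> 4 * \<epsilon>"
        by (rule ratio_bounds[OF eps(1,2) Tpos sc(3) up1 lo])
      thus ?case using eps(3) by (simp add: dist_real_def)
    qed
  qed
qed


end
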